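(* Let $H$ be a weak Hopf algebra, $A$ a symmetric partial $H$-module algebra, $B$ an algebra, $\pi\colon H\to B$ a partial representation and $\phi\colon A\to B$ an algebra morphism such that $(\phi,\pi)$ is a covariant pair. Then there exists a unique algebra morphism $\Phi\colon A\,\underline{\#}\,H\to B$ such that $\Phi\circ\pi_0=\pi$ and $\Phi\circ\phi_0=\phi$, where $\pi_0\colon H\to A\,\underline{\#}\,H$, $\pi_0(h)=1_A\,\underline{\#}\,h$, and $\phi_0\colon A\to A\,\underline{\#}\,H$, $\phi_0(a)=a\,\underline{\#}\,1_H$.
   Context: All algebras are associative and unital over a field $\Bbbk$; Sweedler notation $\Delta(h)=h_1\otimes h_2$, $\Delta(1_H)=1_1\otimes1_2$. A weak Hopf algebra is $(H,m,u,\Delta,\varepsilon,S)$ with $H$ an algebra, $(H,\Delta,\varepsilon)$ a coalgebra, and for all $g,h,k$: $\Delta(kh)=\Delta(k)\Delta(h)$; $\varepsilon(kh_1)\varepsilon(h_2g)=\varepsilon(khg)=\varepsilon(kh_2)\varepsilon(h_1g)$; $(1\otimes\Delta(1))(\Delta(1)\otimes1)=\Delta^2(1)=(\Delta(1)\otimes1)(1\otimes\Delta(1))$; $h_1S(h_2)=\varepsilon_t(h)$; $S(h_1)h_2=\varepsilon_s(h)$; $S(h)=S(h_1)h_2S(h_3)$, with $\varepsilon_t(h)=\varepsilon(1_1h)1_2$, $\varepsilon_s(h)=1_1\varepsilon(h1_2)$. $H_t=\varepsilon_t(H)$, $H_s=\varepsilon_s(H)$, and the restriction $S_R\colon H_s\to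 H_t$ of $S$ is bijective. Partial representation of $H$ in $B$: a linear $\pi\colon H\to B$ with (PR1) $\pi(1_H)=1_B$; (PR2) $\pi(h)\pi(k_1)\pi(S(k_2))=\pi(hk_1)\pi(S(k_2))$; (PR3) $\pi(h)\pi(S(k_1))\pi(k_2)=\pi(hS(k_1))\pi(k_2)$; (PR4) $\pi(h_1)\pi(S(h_2))\pi(k)=\pi(h_1)\pi(S(h_2)k)$; (PR5) $\pi(S(h_1))\pi(h_2)\pi(k)=\pi(S(h_1))\pi(h_2k)$; (PR6) $\pi(h)=\pi(h_1)\pi(S(h_2))\pi(h_3)$. Partial $H$-module algebra: algebra $A$ with linear $h\otimes a\mapsto h\cdot a$ such that $h\cdot(ab)=(h_1\cdot a)(h_2\cdot b)$, $1_H\cdot a=a$, $h\cdot(k\cdot a)=(h_1\cdot1_A)((h_2k)\cdot a)$; symmetric if also $h\cdot(k\cdot a)=((h_1k)\cdot a)(h_2\cdot1_A)$. Smash product $A\#H=A\otimes_{H_t}H$ ($A$ a right $H_t$-module via $a\triangleleft z=a(S_R^{-1}(z)\cdot1_A)$, $H$ a left $H_t$-module by multiplication) with product $(a\#h)(b\#g)=a(h_1\cdot b)\#h_2g$. Partial smash product $A\,\underline{\#}\,H$: the subalgebra generated by $a\,\underline{\#}\,h:=(a\#h)(1_A\#1_H)=a(h_1\cdot1_A)\#h_2$, with unit $1_A\,\underline{\#}\,1_H$. Covariant pair: a pair $(\phi,\pi)$ with $\phi\colon A\to B$ an algebra morphism and $\pi\colon H\to B$ a partial representation such that for all $h\in H$,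 $a\in A$: (CP1) $\phi(h\cdot a)=\pi(h_1)\phi(a)\pi(S(h_2))$; (CP2) $\phi(a)\pi(S(h_1))\pi(h_2)=\pi(S(h_1))\pi(h_2)\phi(a)$. *)

theory Defs
  imports Complex_Main "HOL-Library.Poly_Mapping"
begin

text \<open>We use the sort ring + monoid_mult (no 0 /= 1 requirement), so the zero algebra is allowed.\<close>

definition k_algebra :: "('k::field \<Rightarrow> 'a::{ring,monoid_mult} \<Rightarrow> 'a) \<Rightarrow> bool" where
  "k_algebra s \<longleftrightarrow> vector_space s \<and>
     (\<forall>c x y. s c (x * y) = s c x * y \<and> s c (x * y) = x * s c y)"

definition bilin :: "('k::field \<Rightarrow> 'u::ab_group_add \<Rightarrow> 'u) \<Rightarrow> ('k \<Rightarrow> 'v::ab_group_add \<Rightarrow> 'v)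
    \<Rightarrow> ('k \<Rightarrow> 'w::ab_group_add \<Rightarrow> 'w) \<Rightarrow> ('u \<Rightarrow> 'v \<Rightarrow> 'w) \<Rightarrow> bool" where
  "bilin s1 s2 t f \<longleftrightarrow> (\<forall>y. Vector_Spaces.linear s1 t (\<lambda>x. f x y)) \<and>
                      (\<forall>x. Vector_Spaces.linear s2 t (\<lambda>y. f x y))"

definition trilin :: "('k::field \<Rightarrow> 'u::ab_group_add \<Rightarrow> 'u) \<Rightarrow> ('k \<Rightarrow> 'v::ab_group_add \<Rightarrow> 'v)
    \<Rightarrow> ('k \<Rightarrow> 'w::ab_group_add \<Rightarrow> 'w) \<Rightarrow> ('k \<Rightarrow> 'z::ab_group_add \<Rightarrow> 'z)
    \<Rightarrow> ('u \<Rightarrow> 'v \<Rightarrow> 'w \<Rightarrow> 'z) \<Rightarrow> bool" where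
  "trilin s1 s2 s3 t f \<longleftrightarrow> (\<forall>y z. Vector_Spaces.linear s1 t (\<lambda>x. f x y z)) \<and>
                         (\<forall>x z. Vector_Spaces.linear s2 t (\<lambda>y. f x y z)) \<and>
                         (\<forall>x y. Vector_Spaces.linear s3 t (\<lambda>z. f x y z))"

text \<open>An element of the tensor product U (x) V is represented by a finite formal sum
 of pure tensors, i.e. a finitely supported function T :: ('u x 'v) =>0 'k standing for
 Sum T(u,v) u (x) v.\<close>

definition sw :: "('k::field \<Rightarrow> 'w \<Rightarrow> 'w) \<Rightarrow> ('u \<times> 'v \<Rightarrow>\<^sub>0 'k) \<Rightarrow> ('u \<Rightarrow> 'v \<Rightarrow> 'w::comm_monoid_add) \<Rightarrow> 'w" where
  "sw t T f = (\<Sum>p\<in>Poly_Mapping.keys T. t (Poly_Mapping.lookup T p) (f (fst p) (snd p)))"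

text \<open>Equality in U (x)_k V of two formal sums: over a field, the linear functionals on
 U (x) V are exactly the bilinear forms, and they separate points.\<close>

definition teq :: "('k::field \<Rightarrow> 'u::ab_group_add \<Rightarrow> 'u) \<Rightarrow> ('k \<Rightarrow> 'v::ab_group_add \<Rightarrow> 'v)
   \<Rightarrow> ('u \<times> 'v \<Rightarrow>\<^sub>0 'k) \<Rightarrow> ('u \<times> 'v \<Rightarrow>\<^sub>0 'k) \<Rightarrow> bool" where
  "teq s1 s2 T T' \<longleftrightarrow> (\<forall>f. bilin s1 s2 (*) f \<longrightarrow> sw (*) T f = sw (*) T' f)"

text \<open>The comultiplication is given as a map D :: 'h \<Rightarrow> ('h x 'h =>0 'k) choosing, for each h,
 a formal sum representing Delta(h) = h_1 (x) h_2.  Every identity in H (x) H (resp. H (x) H (x) H)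
 is stated by pairing with all k-valued bilinear (resp. trilinear) forms.\<close>

definition eps_t :: "('h::{ring,monoid_mult} \<Rightarrow> 'h \<times> 'h \<Rightarrow>\<^sub>0 'k::field) \<Rightarrow> ('h \<Rightarrow> 'k)
     \<Rightarrow> ('k \<Rightarrow> 'h \<Rightarrow> 'h) \<Rightarrow> 'h \<Rightarrow> 'h" where
  "eps_t D eps sH h = sw sH (D 1) (\<lambda>x y. sH (eps (x * h)) y)"

definition eps_s :: "('h::{ring,monoid_mult} \<Rightarrow> 'h \<times> 'h \<Rightarrow>\<^sub>0 'k::field) \<Rightarrow> ('h \<Rightarrow> 'k)
     \<Rightarrow> ('k \<Rightarrow> 'h \<Rightarrow> 'h) \<Rightarrow> 'h \<Rightarrow> 'h" where
  "eps_s D eps sH h = sw sH (D 1) (\<lambda>x y. sH (eps (h * y)) x)"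

definition weak_hopf :: "('k::field \<Rightarrow> 'h::{ring,monoid_mult} \<Rightarrow> 'h) \<Rightarrow> ('h \<Rightarrow> 'h \<times> 'h \<Rightarrow>\<^sub>0 'k)
     \<Rightarrow> ('h \<Rightarrow> 'k) \<Rightarrow> ('h \<Rightarrow> 'h) \<Rightarrow> bool" where
  "weak_hopf sH D eps S \<longleftrightarrow>
     k_algebra sH \<and>
     \<comment> \<open>\<Delta>, \<epsilon>, S are linear\<close>
     (\<forall>f. bilin sH sH (*) f \<longrightarrow> Vector_Spaces.linear sH (*) (\<lambda>h. sw (*) (D h) f)) \<and>
     Vector_Spaces.linear sH (*) eps \<and>
     Vector_Spaces.linear sH sH S \<and>
     \<comment> \<open>coassociativity\<close>
     (\<forall>f h. trilin sH sH sH (*) f \<longrightarrow>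
        sw (*) (D h) (\<lambda>x y. sw (*) (D x) (\<lambda>u v. f u v y)) =
        sw (*) (D h) (\<lambda>x y. sw (*) (D y) (\<lambda>u v. f x u v))) \<and>
     \<comment> \<open>counit\<close>
     (\<forall>h. sw sH (D h) (\<lambda>x y. sH (eps x) y) = h \<and> sw sH (D h) (\<lambda>x y. sH (eps y) x) = h) \<and>
     \<comment> \<open>\<Delta>(kh) = \<Delta>(k)\<Delta>(h)\<close>
     (\<forall>f k h. bilin sH sH (*) f \<longrightarrow>
        sw (*) (D (k * h)) f = sw (*) (D k) (\<lambda>x y. sw (*) (D h) (\<lambda>u v. f (x * u) (y * v)))) \<and>
     \<comment> \<open>weak multiplicativity of the counit\<close>
     (\<forall>k h g. sw (*) (D h) (\<lambda>x y. eps (k * x) * eps (y * g)) = eps (k * h * g) \<and>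
              eps (k * h * g) = sw (*) (D h) (\<lambda>x y. eps (k * y) * eps (x * g))) \<and>
     \<comment> \<open>weak comultiplicativity of the unit\<close>
     (\<forall>f. trilin sH sH sH (*) f \<longrightarrow>
        sw (*) (D 1) (\<lambda>x y. sw (*) (D 1) (\<lambda>u v. f x (u * y) v)) =
          sw (*) (D 1) (\<lambda>x y. sw (*) (D x) (\<lambda>u v. f u v y)) \<and>
        sw (*) (D 1) (\<lambda>x y. sw (*) (D x) (\<lambda>u v. f u v y)) =
          sw (*) (D 1) (\<lambda>x y. sw (*) (D 1) (\<lambda>u v. f x (y * u) v))) \<and>
     \<comment> \<open>antipode axioms\<close>
     (\<forall>h. sw sH (D h) (\<lambda>x y. x * S y) = eps_t D eps sH h) \<and>
     (\<forall>h. sw sH (D h) (\<lambda>x y. S x * y) = eps_s D eps sH h) \<and>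
     (\<forall>h. S h = sw sH (D h) (\<lambda>x y. sw sH (D y) (\<lambda>u v. S x * u * S v)))"

definition Ht :: "('h::{ring,monoid_mult} \<Rightarrow> 'h \<times> 'h \<Rightarrow>\<^sub>0 'k::field) \<Rightarrow> ('h \<Rightarrow> 'k)
     \<Rightarrow> ('k \<Rightarrow> 'h \<Rightarrow> 'h) \<Rightarrow> 'h set" where
  "Ht D eps sH = range (eps_t D eps sH)"

definition Hs :: "('h::{ring,monoid_mult} \<Rightarrow> 'h \<times> 'h \<Rightarrow>\<^sub>0 'k::field) \<Rightarrow> ('h \<Rightarrow> 'k)
     \<Rightarrow> ('k \<Rightarrow> 'h \<Rightarrow> 'h) \<Rightarrow> 'h set" where
  "Hs D eps sH = range (eps_s D eps sH)"

definition SR_inv :: "('h::{ring,monoid_mult} \<Rightarrow> 'h \<times> 'h \<Rightarrow>\<^sub>0 'k::field) \<Rightarrow> ('h \<Rightarrow> 'k)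
     \<Rightarrow> ('k \<Rightarrow> 'h \<Rightarrow> 'h) \<Rightarrow> ('h \<Rightarrow> 'h) \<Rightarrow> 'h \<Rightarrow> 'h" where
  "SR_inv D eps sH S = inv_into (Hs D eps sH) S"

definition partial_rep :: "('k::field \<Rightarrow> 'h::{ring,monoid_mult} \<Rightarrow> 'h) \<Rightarrow> ('h \<Rightarrow> 'h \<times> 'h \<Rightarrow>\<^sub>0 'k)
     \<Rightarrow> ('h \<Rightarrow> 'h) \<Rightarrow> ('k \<Rightarrow> 'b::{ring,monoid_mult} \<Rightarrow> 'b) \<Rightarrow> ('h \<Rightarrow> 'b) \<Rightarrow> bool" where
  "partial_rep sH D S sB \<pi> \<longleftrightarrow>
     Vector_Spaces.linear sH sB \<pi> \<and>
     \<pi> 1 = 1 \<and>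
     (\<forall>h k. sw sB (D k) (\<lambda>x y. \<pi> h * \<pi> x * \<pi> (S y)) = sw sB (D k) (\<lambda>x y. \<pi> (h * x) * \<pi> (S y))) \<and>
     (\<forall>h k. sw sB (D k) (\<lambda>x y. \<pi> h * \<pi> (S x) * \<pi> y) = sw sB (D k) (\<lambda>x y. \<pi> (h * S x) * \<pi> y)) \<and>
     (\<forall>h k. sw sB (D h) (\<lambda>x y. \<pi> x * \<pi> (S y) * \<pi> k) = sw sB (D h) (\<lambda>x y. \<pi> x * \<pi> (S y * k))) \<and>
     (\<forall>h k. sw sB (D h) (\<lambda>x y. \<pi> (S x) * \<pi> y * \<pi> k) = sw sB (D h) (\<lambda>x y. \<pi> (S x) * \<pi> (y * k))) \<and>
     (\<forall>h. \<pi> h = sw sB (D h) (\<lambda>x y. sw sB (D y) (\<lambda>u v. \<pi> x * \<pi> (S u) * \<pi> v)))"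

definition partial_module_algebra :: "('k::field \<Rightarrow> 'h::{ring,monoid_mult} \<Rightarrow> 'h) \<Rightarrow> ('h \<Rightarrow> 'h \<times> 'h \<Rightarrow>\<^sub>0 'k)
     \<Rightarrow> ('k \<Rightarrow> 'a::{ring,monoid_mult} \<Rightarrow> 'a) \<Rightarrow> ('h \<Rightarrow> 'a \<Rightarrow> 'a) \<Rightarrow> bool" where
  "partial_module_algebra sH D sA act \<longleftrightarrow>
     k_algebra sA \<and>
     bilin sH sA sA act \<and>
     (\<forall>h a b. act h (a * b) = sw sA (D h) (\<lambda>x y. act x a * act y b)) \<and>
     (\<forall>a. act 1 a = a) \<and>
     (\<forall>h k a. act h (act k a) = sw sA (D h) (\<lambda>x y. act x 1 * act (y * k) a))"

definition symmetric_partial_module_algebra :: "('k::field \<Rightarrow> 'h::{ring,monoid_mult} \<Rightarrow> 'h)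
     \<Rightarrow> ('h \<Rightarrow> 'h \<times> 'h \<Rightarrow>\<^sub>0 'k) \<Rightarrow> ('k \<Rightarrow> 'a::{ring,monoid_mult} \<Rightarrow> 'a) \<Rightarrow> ('h \<Rightarrow> 'a \<Rightarrow> 'a) \<Rightarrow> bool" where
  "symmetric_partial_module_algebra sH D sA act \<longleftrightarrow>
     partial_module_algebra sH D sA act \<and>
     (\<forall>h k a. act h (act k a) = sw sA (D h) (\<lambda>x y. act (x * k) a * act y 1))"

definition alg_hom :: "('k::field \<Rightarrow> 'a::{ring,monoid_mult} \<Rightarrow> 'a) \<Rightarrow> ('k \<Rightarrow> 'b::{ring,monoid_mult} \<Rightarrow> 'b)
     \<Rightarrow> ('a \<Rightarrow> 'b) \<Rightarrow> bool" where
  "alg_hom sA sB f \<longleftrightarrow> Vector_Spaces.linear sA sB f \<and> f 1 = 1 \<and> (\<forall>a b. f (a * b) = f a * f b)"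

definition covariant_pair :: "('k::field \<Rightarrow> 'h::{ring,monoid_mult} \<Rightarrow> 'h) \<Rightarrow> ('h \<Rightarrow> 'h \<times> 'h \<Rightarrow>\<^sub>0 'k)
     \<Rightarrow> ('h \<Rightarrow> 'h) \<Rightarrow> ('k \<Rightarrow> 'a::{ring,monoid_mult} \<Rightarrow> 'a) \<Rightarrow> ('h \<Rightarrow> 'a \<Rightarrow> 'a)
     \<Rightarrow> ('k \<Rightarrow> 'b::{ring,monoid_mult} \<Rightarrow> 'b) \<Rightarrow> ('a \<Rightarrow> 'b) \<Rightarrow> ('h \<Rightarrow> 'b) \<Rightarrow> bool" where
  "covariant_pair sH D S sA act sB \<phi> \<pi> \<longleftrightarrow>
     alg_hom sA sB \<phi> \<and> partial_rep sH D S sB \<pi> \<and>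
     (\<forall>h a. \<phi> (act h a) = sw sB (D h) (\<lambda>x y. \<pi> x * \<phi> a * \<pi> (S y))) \<and>
     (\<forall>h a. \<phi> a * sw sB (D h) (\<lambda>x y. \<pi> (S x) * \<pi> y) = sw sB (D h) (\<lambda>x y. \<pi> (S x) * \<pi> y) * \<phi> a)"

text \<open>Elements of A # H are represented by formal sums X :: ('a x 'h) =>0 'k, standing for
 Sum X(a,h) a # h.  Two representatives are equal in A (x)_{H_t} H iff they agree on all
 k-valued bilinear forms on A x H that are H_t-balanced, i.e. beta(a <| z, h) = beta(a, z h)
 for z in H_t, where a <| z = a (S_R^{-1}(z) . 1_A).\<close>

definition ract :: "('h::{ring,monoid_mult} \<Rightarrow> 'h \<times> 'h \<Rightarrow>\<^sub>0 'k::field) \<Rightarrow> ('h \<Rightarrow> 'k)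
     \<Rightarrow> ('k \<Rightarrow> 'h \<Rightarrow> 'h) \<Rightarrow> ('h \<Rightarrow> 'h) \<Rightarrow> ('h \<Rightarrow> 'a::{ring,monoid_mult} \<Rightarrow> 'a) \<Rightarrow> 'a \<Rightarrow> 'h \<Rightarrow> 'a" where
  "ract D eps sH S act a z = a * act (SR_inv D eps sH S z) 1"

definition smash_eq :: "('k::field \<Rightarrow> 'h::{ring,monoid_mult} \<Rightarrow> 'h) \<Rightarrow> ('h \<Rightarrow> 'h \<times> 'h \<Rightarrow>\<^sub>0 'k)
     \<Rightarrow> ('h \<Rightarrow> 'k) \<Rightarrow> ('h \<Rightarrow> 'h) \<Rightarrow> ('k \<Rightarrow> 'a::{ring,monoid_mult} \<Rightarrow> 'a) \<Rightarrow> ('h \<Rightarrow> 'a \<Rightarrow> 'a)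
     \<Rightarrow> ('a \<times> 'h \<Rightarrow>\<^sub>0 'k) \<Rightarrow> ('a \<times> 'h \<Rightarrow>\<^sub>0 'k) \<Rightarrow> bool" where
  "smash_eq sH D eps S sA act X Y \<longleftrightarrow>
     (\<forall>f. bilin sA sH (*) f \<longrightarrow>
          (\<forall>a z h. z \<in> Ht D eps sH \<longrightarrow> f (ract D eps sH S act a z) h = f a (z * h)) \<longrightarrow>
          sw (*) X f = sw (*) Y f)"

text \<open>Pure tensor a # h, scalar multiple, and product (a # h)(b # g) = a (h_1 . b) # h_2 g.\<close>

definition stens :: "'a \<Rightarrow> 'h \<Rightarrow> ('a \<times> 'h \<Rightarrow>\<^sub>0 'k::field)" where
  "stens a h = Poly_Mapping.single (a, h) 1"

definition sscale :: "'k::field \<Rightarrow> ('a \<times> 'h \<Rightarrow>\<^sub>0 'k) \<Rightarrow> ('a \<times> 'h \<Rightarrow>\<^sub>0 'k)" where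
  "sscale c X = (\<Sum>p\<in>Poly_Mapping.keys X. Poly_Mapping.single p (c * Poly_Mapping.lookup X p))"

definition smult :: "('h::{ring,monoid_mult} \<Rightarrow> 'h \<times> 'h \<Rightarrow>\<^sub>0 'k::field) \<Rightarrow> ('h \<Rightarrow> 'a::{ring,monoid_mult} \<Rightarrow> 'a)
     \<Rightarrow> ('a \<times> 'h \<Rightarrow>\<^sub>0 'k) \<Rightarrow> ('a \<times> 'h \<Rightarrow>\<^sub>0 'k) \<Rightarrow> ('a \<times> 'h \<Rightarrow>\<^sub>0 'k)" where
  "smult D act X Y =
     (\<Sum>p\<in>Poly_Mapping.keys X. \<Sum>q\<in>Poly_Mapping.keys Y. \<Sum>r\<in>Poly_Mapping.keys (D (snd p)).
        Poly_Mapping.single (fst p * act (fst r) (fst q), snd r * snd q)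
          (Poly_Mapping.lookup X p * Poly_Mapping.lookup Y q * Poly_Mapping.lookup (D (snd p)) r))"

definition pstens :: "('h::{ring,monoid_mult} \<Rightarrow> 'h \<times> 'h \<Rightarrow>\<^sub>0 'k::field) \<Rightarrow> ('h \<Rightarrow> 'a::{ring,monoid_mult} \<Rightarrow> 'a)
     \<Rightarrow> 'a \<Rightarrow> 'h \<Rightarrow> ('a \<times> 'h \<Rightarrow>\<^sub>0 'k)" where
  "pstens D act a h = smult D act (stens a h) (stens 1 1)"

text \<open>Representatives of elements of the partial smash product: the subalgebra of A # H
 generated by all a #_ h (closed under sums, scalars, products and equality in A # H).\<close>
inductive_set psmash :: "('k::field \<Rightarrow> 'h::{ring,monoid_mult} \<Rightarrow> 'h) \<Rightarrow> ('h \<Rightarrow> 'h \<times> 'h \<Rightarrow>\<^sub>0 'k)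
     \<Rightarrow> ('h \<Rightarrow> 'k) \<Rightarrow> ('h \<Rightarrow> 'h) \<Rightarrow> ('k \<Rightarrow> 'a::{ring,monoid_mult} \<Rightarrow> 'a) \<Rightarrow> ('h \<Rightarrow> 'a \<Rightarrow> 'a)
     \<Rightarrow> ('a \<times> 'h \<Rightarrow>\<^sub>0 'k) set"
  for sH D eps S sA act where
    gen: "pstens D act a h \<in> psmash sH D eps S sA act"
  | add: "X \<in> psmash sH D eps S sA act \<Longrightarrow> Y \<in> psmash sH D eps S sA act \<Longrightarrow>
          X + Y \<in> psmash sH D eps S sA act"
  | scale: "X \<in> psmash sH D eps S sA act \<Longrightarrow> sscale c X \<in> psmash sH D eps S sA act"
  | mult: "X \<in> psmash sH D eps S sA act \<Longrightarrow> Y \<in> psmash sH D eps S sA act \<Longrightarrow>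
          smult D act X Y \<in> psmash sH D eps S sA act"
  | eq: "X \<in> psmash sH D eps S sA act \<Longrightarrow> smash_eq sH D eps S sA act Y X \<Longrightarrow>
          Y \<in> psmash sH D eps S sA act"

text \<open>Algebra morphisms out of the partial smash product (given on representatives,
 required to be well defined on classes).\<close>
definition psmash_hom :: "('k::field \<Rightarrow> 'h::{ring,monoid_mult} \<Rightarrow> 'h) \<Rightarrow> ('h \<Rightarrow> 'h \<times> 'h \<Rightarrow>\<^sub>0 'k)
     \<Rightarrow> ('h \<Rightarrow> 'k) \<Rightarrow> ('h \<Rightarrow> 'h) \<Rightarrow> ('k \<Rightarrow> 'a::{ring,monoid_mult} \<Rightarrow> 'a) \<Rightarrow> ('h \<Rightarrow> 'a \<Rightarrow> 'a)
     \<Rightarrow> ('k \<Rightarrow> 'b::{ring,monoid_mult} \<Rightarrow> 'b) \<Rightarrow> (('a \<times> 'h \<Rightarrow>\<^sub>0 'k) \<Rightarrow> 'b) \<Rightarrow> bool" where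
  "psmash_hom sH D eps S sA act sB \<Phi> \<longleftrightarrow>
     (let P = psmash sH D eps S sA act in
       (\<forall>X\<in>P. \<forall>Y\<in>P. smash_eq sH D eps S sA act X Y \<longrightarrow> \<Phi> X = \<Phi> Y) \<and>
       (\<forall>X\<in>P. \<forall>Y\<in>P. \<Phi> (X + Y) = \<Phi> X + \<Phi> Y) \<and>
       (\<forall>c. \<forall>X\<in>P. \<Phi> (sscale c X) = sB c (\<Phi> X)) \<and>
       (\<forall>X\<in>P. \<forall>Y\<in>P. \<Phi> (smult D act X Y) = \<Phi> X * \<Phi> Y) \<and>
       \<Phi> (pstens D act 1 1) = 1)"

end

theory Submission
  imports Defs
begin


abbreviation "lin \<equiv> Vector_Spaces.linear"

lemma vs_field: "vector_space ((*)::'k::field\<Rightarrow>'k\<Rightarrow>'k)"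
  by (rule vector_space.intro) (auto simp: algebra_simps)

lemma kalg_field: "k_algebra ((*)::'k::field\<Rightarrow>'k\<Rightarrow>'k)"
  unfolding k_algebra_def by (auto simp: vs_field algebra_simps)

lemma ka_vs: "k_algebra s \<Longrightarrow> vector_space s"
  unfolding k_algebra_def by metis

lemma ka_l: "k_algebra s \<Longrightarrow> s c (x * y) = s c x * y"
  unfolding k_algebra_def by metis
lemma ka_r: "k_algebra s \<Longrightarrow> s c (x * y) = x * s c y"
  unfolding k_algebra_def by metis

lemma lin_vs1: "lin s t f \<Longrightarrow> vector_space s" by (simp add: Vector_Spaces.linear_iff)
lemma lin_vs2: "lin s t f \<Longrightarrow> vector_space t" by (simp add: Vector_Spaces.linear_iff)
lemma lin_add: "lin s t f \<Longrightarrow> f (x + y) = f x + f y" by (simp add: Vector_Spaces.linear_iff)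
lemma lin_scale: "lin s t f \<Longrightarrow> f (s c x) = t c (f x)" by (simp add: Vector_Spaces.linear_iff)
lemma lin_zero: "lin s t f \<Longrightarrow> f 0 = 0"
  by (metis add_cancel_right_right lin_add)

lemma lin_id: "vector_space s \<Longrightarrow> lin s s (\<lambda>x. x)"
  by (simp add: Vector_Spaces.linear_iff)

lemma lin_mult_r: "lin s t f \<Longrightarrow> k_algebra t \<Longrightarrow> lin s t (\<lambda>x. f x * c)"
  unfolding Vector_Spaces.linear_iff k_algebra_def by (auto simp: distrib_right)

lemma lin_mult_l: "lin s t f \<Longrightarrow> k_algebra t \<Longrightarrow> lin s t (\<lambda>x. c * f x)"
  unfolding Vector_Spaces.linear_iff k_algebra_def by (auto simp: distrib_left) metis

lemma lin_comp: "lin t u g \<Longrightarrow> lin s t f \<Longrightarrow> lin s u (\<lambda>x. g (f x))"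
  unfolding Vector_Spaces.linear_iff by auto

lemma lin_scale_l: "lin s (*) c \<Longrightarrow> vector_space t \<Longrightarrow> lin s t (\<lambda>x. t (c x) v)"
  unfolding Vector_Spaces.linear_iff by (auto simp: vector_space.vector_space_assms)

lemma lin_scale_r: "lin s t f \<Longrightarrow> lin s t (\<lambda>x. t c (f x))"
  unfolding Vector_Spaces.linear_iff 
  by (auto simp: vector_space.vector_space_assms mult.commute)

lemma lin_plus: "lin s t f \<Longrightarrow> lin s t g \<Longrightarrow> lin s t (\<lambda>x. f x + g x)"
  unfolding Vector_Spaces.linear_iff 
  by (auto simp: vector_space.vector_space_assms)

lemma vs_sum_right: "vector_space t \<Longrightarrow> t a (sum f A) = (\<Sum>x\<in>A. t a (f x))"
proof -
  assume "vector_space t"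
  interpret vector_space t by fact
  show ?thesis by (rule scale_sum_right)
qed

lemma vs_comm: "vector_space t \<Longrightarrow> t a (t b x) = t b (t a x)"
  by (simp add: vector_space.vector_space_assms(3) mult.commute)

lemma sw_cong: "(\<And>x y. (x,y) \<in> Poly_Mapping.keys T \<Longrightarrow> f x y = g x y) \<Longrightarrow> sw t T f = sw t T g"
  unfolding sw_def by (rule sum.cong) auto

lemma sw_linear_map: "lin s t L \<Longrightarrow> L (sw s T f) = sw t T (\<lambda>x y. L (f x y))"
proof -
  assume L: "lin s t L"
  interpret Vector_Spaces.linear s t L by fact
  show ?thesis unfolding sw_def by (simp add: sum scale)
qed

lemma sw_swap: "vector_space t \<Longrightarrow>
   sw t T (\<lambda>x y. sw t U (G x y)) = sw t U (\<lambda>u v. sw t T (\<lambda>x y. G x y u v))"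
  unfolding sw_def
  by (simp add: vs_sum_right sum.swap[of _ "Poly_Mapping.keys T"] vs_comm[of t "poly_mapping.lookup T _"])

lemma lin_sw: "vector_space s \<Longrightarrow> vector_space t \<Longrightarrow> (\<And>u v. lin s t (\<lambda>x. F x u v)) \<Longrightarrow>
   lin s t (\<lambda>x. sw t T (\<lambda>u v. F x u v))"
  unfolding Vector_Spaces.linear_iff sw_def
  by (auto simp: vector_space.vector_space_assms vs_sum_right sum.distrib mult.commute)

lemma sep:
  assumes vs: "vector_space s" and h: "\<And>l. lin s ((*)::'k::field\<Rightarrow>'k\<Rightarrow>'k) l \<Longrightarrow> l u = l v"
  shows "u = v"
proof (rule ccontr)
  assume ne: "u \<noteq> v"
  interpret vector_space s by fact
  interpret P: vector_space_pair s "(*)::'k\<Rightarrow>'k\<Rightarrow>'k"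
    by (unfold_locales) (auto simp: vs_field vector_space_assms algebra_simps)
  have "independent {u - v}"
    using ne by (simp add: independent_insert span_empty)
  then obtain g where g: "lin s (*) g" "g (u - v) = (1::'k)"
    using P.linear_independent_extend[of "{u - v}" "\<lambda>_. 1"] by auto
  have "g (u - v) = g u - g v"
    using g(1) by (simp add: P.linear_diff)
  then show False using h[OF g(1)] g(2) by simp
qed

lemma bilinI: "(\<And>y. lin s1 t (\<lambda>x. f x y)) \<Longrightarrow> (\<And>x. lin s2 t (\<lambda>y. f x y)) \<Longrightarrow> bilin s1 s2 t f"
  unfolding bilin_def by auto
lemma trilinI: "(\<And>y z. lin s1 t (\<lambda>x. f x y z)) \<Longrightarrow> (\<And>x z. lin s2 t (\<lambda>y. f x y z)) \<Longrightarrow>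
   (\<And>x y. lin s3 t (\<lambda>z. f x y z)) \<Longrightarrow> trilin s1 s2 s3 t f"
  unfolding trilin_def by auto
lemma bilinD1: "bilin s1 s2 t f \<Longrightarrow> lin s1 t (\<lambda>x. f x y)" unfolding bilin_def by auto
lemma bilinD2: "bilin s1 s2 t f \<Longrightarrow> lin s2 t (\<lambda>y. f x y)" unfolding bilin_def by auto
lemma trilinD1: "trilin s1 s2 s3 t f \<Longrightarrow> lin s1 t (\<lambda>x. f x y z)" unfolding trilin_def by auto
lemma trilinD2: "trilin s1 s2 s3 t f \<Longrightarrow> lin s2 t (\<lambda>y. f x y z)" unfolding trilin_def by auto
lemma trilinD3: "trilin s1 s2 s3 t f \<Longrightarrow> lin s3 t (\<lambda>z. f x y z)" unfolding trilin_def by auto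

lemma lin_compD1: "bilin s1 s2 t f \<Longrightarrow> lin s s1 g \<Longrightarrow> lin s t (\<lambda>x. f (g x) y)"
  by (rule lin_comp[OF bilinD1]) 
lemma lin_compD2: "bilin s1 s2 t f \<Longrightarrow> lin s s2 g \<Longrightarrow> lin s t (\<lambda>x. f y (g x))"
  by (rule lin_comp[OF bilinD2]) 
lemma lin_compT1: "trilin s1 s2 s3 t f \<Longrightarrow> lin s s1 g \<Longrightarrow> lin s t (\<lambda>x. f (g x) y z)"
  by (rule lin_comp[OF trilinD1]) 
lemma lin_compT2: "trilin s1 s2 s3 t f \<Longrightarrow> lin s s2 g \<Longrightarrow> lin s t (\<lambda>x. f y (g x) z)"
  by (rule lin_comp[OF trilinD2]) 
lemma lin_compT3: "trilin s1 s2 s3 t f \<Longrightarrow> lin s s3 g \<Longrightarrow> lin s t (\<lambda>x. f y z (g x))"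
  by (rule lin_comp[OF trilinD3]) 

lemma lin_compL: "lin t u L \<Longrightarrow> lin s t f \<Longrightarrow> lin s u (\<lambda>x. L (f x))"
  by (rule lin_comp)

lemma sw_mult_left: "k_algebra s \<Longrightarrow> c * sw s T f = sw s T (\<lambda>x y. c * f x y)"
  by (rule sw_linear_map) (intro lin_mult_l lin_id ka_vs)
lemma sw_mult_right: "k_algebra s \<Longrightarrow> sw s T f * c = sw s T (\<lambda>x y. f x y * c)"
  by (rule sw_linear_map) (intro lin_mult_r lin_id ka_vs)
lemma sw_scale: "vector_space s \<Longrightarrow> s c (sw s T f) = sw s T (\<lambda>x y. s c (f x y))"
  by (rule sw_linear_map) (intro lin_scale_r lin_id)

named_theorems li

declare lin_id[li] lin_mult_r[li] lin_mult_l[li] lin_scale_l[li] lin_scale_r[li] lin_sw[li]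
  lin_plus[li] vs_field[li] kalg_field[li] bilinI[li] trilinI[li]

lemma ka_ml: "k_algebra t \<Longrightarrow> t c x * y = t c (x * y)" by (simp add: ka_l)
lemma ka_mr: "k_algebra t \<Longrightarrow> x * t c y = t c (x * y)" by (simp add: ka_r)
lemma vs_ss: "vector_space t \<Longrightarrow> t c (t d x) = t (c * d) x"
  by (simp add: vector_space.vector_space_assms(3))

locale wha =
  fixes sH :: "'k::field \<Rightarrow> 'h::{ring,monoid_mult} \<Rightarrow> 'h"
    and D :: "'h \<Rightarrow> ('h \<times> 'h \<Rightarrow>\<^sub>0 'k)"
    and eps :: "'h \<Rightarrow> 'k"
    and S :: "'h \<Rightarrow> 'h"
  assumes wh: "weak_hopf sH D eps S"
begin

abbreviation "et \<equiv> eps_t D eps sH"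
abbreviation "es \<equiv> eps_s D eps sH"

lemma kaH: "k_algebra sH" using wh unfolding weak_hopf_def by blast
lemma vsH: "vector_space sH" using kaH ka_vs by auto
lemma linD_k: "bilin sH sH (*) f \<Longrightarrow> lin sH (*) (\<lambda>h. sw (*) (D h) f)"
  using wh unfolding weak_hopf_def by blast
lemma lin_eps: "lin sH (*) eps" using wh unfolding weak_hopf_def by blast
lemma lin_S: "lin sH sH S" using wh unfolding weak_hopf_def by blast
lemma coassoc_k: "trilin sH sH sH (*) f \<Longrightarrow>
        sw (*) (D h) (\<lambda>x y. sw (*) (D x) (\<lambda>u v. f u v y)) =
        sw (*) (D h) (\<lambda>x y. sw (*) (D y) (\<lambda>u v. f x u v))"
  using wh unfolding weak_hopf_def by blast
lemma counit1: "sw sH (D h) (\<lambda>x y. sH (eps x) y) = h" using wh unfolding weak_hopf_def by blast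
lemma counit2: "sw sH (D h) (\<lambda>x y. sH (eps y) x) = h" using wh unfolding weak_hopf_def by blast
lemma dmult_k: "bilin sH sH (*) f \<Longrightarrow>
        sw (*) (D (k * h)) f = sw (*) (D k) (\<lambda>x y. sw (*) (D h) (\<lambda>u v. f (x * u) (y * v)))"
  using wh unfolding weak_hopf_def by blast
lemma epsm1: "sw (*) (D h) (\<lambda>x y. eps (k * x) * eps (y * g)) = eps (k * h * g)"
  using wh unfolding weak_hopf_def by blast
lemma epsm2: "eps (k * h * g) = sw (*) (D h) (\<lambda>x y. eps (k * y) * eps (x * g))"
  using wh unfolding weak_hopf_def by blast
lemma wcomult_k: "trilin sH sH sH (*) f \<Longrightarrow>
        sw (*) (D 1) (\<lambda>x y. sw (*) (D 1) (\<lambda>u v. f x (u * y) v)) =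
          sw (*) (D 1) (\<lambda>x y. sw (*) (D x) (\<lambda>u v. f u v y)) \<and>
        sw (*) (D 1) (\<lambda>x y. sw (*) (D x) (\<lambda>u v. f u v y)) =
          sw (*) (D 1) (\<lambda>x y. sw (*) (D 1) (\<lambda>u v. f x (y * u) v))"
  using wh unfolding weak_hopf_def by blast
lemma anti1: "sw sH (D h) (\<lambda>x y. x * S y) = et h" using wh unfolding weak_hopf_def by blast
lemma anti2: "sw sH (D h) (\<lambda>x y. S x * y) = es h" using wh unfolding weak_hopf_def by blast
lemma anti3: "S h = sw sH (D h) (\<lambda>x y. sw sH (D y) (\<lambda>u v. S x * u * S v))"
  using wh unfolding weak_hopf_def by blast

lemma bilin_comp: "bilin s1 s2 t F \<Longrightarrow> lin t u l \<Longrightarrow> bilin s1 s2 u (\<lambda>x y. l (F x y))"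
proof -
  assume F: "bilin s1 s2 t F" and l: "lin t u l"
  show ?thesis by (rule bilinI; rule lin_comp[OF l]; rule bilinD1[OF F] bilinD2[OF F])
qed
lemma trilin_comp: "trilin s1 s2 s3 t F \<Longrightarrow> lin t u l \<Longrightarrow> trilin s1 s2 s3 u (\<lambda>x y z. l (F x y z))"
proof -
  assume F: "trilin s1 s2 s3 t F" and l: "lin t u l"
  show ?thesis by (rule trilinI; rule lin_comp[OF l]; rule trilinD1[OF F] trilinD2[OF F] trilinD3[OF F])
qed

lemma linD:
  assumes vs: "vector_space sV" and F: "bilin sH sH sV F"
  shows "lin sH sV (\<lambda>h. sw sV (D h) F)"
  unfolding Vector_Spaces.linear_iff
proof (intro conjI allI vsH vs)
  fix x y
  show "sw sV (D (x + y)) F = sw sV (D x) F + sw sV (D y) F"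
  proof (rule sep[OF vs])
    fix l :: "_ \<Rightarrow> 'k" assume l: "lin sV (*) l"
    have L: "lin sH (*) (\<lambda>h. sw (*) (D h) (\<lambda>x y. l (F x y)))"
      by (rule linD_k[OF bilin_comp[OF F l]])
    show "l (sw sV (D (x + y)) F) = l (sw sV (D x) F + sw sV (D y) F)"
      unfolding lin_add[OF l] sw_linear_map[OF l] by (rule lin_add[OF L])
  qed
next
  fix c x
  show "sw sV (D (sH c x)) F = sV c (sw sV (D x) F)"
  proof (rule sep[OF vs])
    fix l :: "_ \<Rightarrow> 'k" assume l: "lin sV (*) l"
    have L: "lin sH (*) (\<lambda>h. sw (*) (D h) (\<lambda>x y. l (F x y)))"
      by (rule linD_k[OF bilin_comp[OF F l]])
    show "l (sw sV (D (sH c x)) F) = l (sV c (sw sV (D x) F))"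
      unfolding lin_scale[OF l] sw_linear_map[OF l] by (rule lin_scale[OF L])
  qed
qed

lemma coassoc:
  assumes vs: "vector_space sV" and F: "trilin sH sH sH sV F"
  shows "sw sV (D h) (\<lambda>x y. sw sV (D x) (\<lambda>u v. F u v y)) =
        sw sV (D h) (\<lambda>x y. sw sV (D y) (\<lambda>u v. F x u v))"
proof (rule sep[OF vs])
  fix l :: "_ \<Rightarrow> 'k" assume l: "lin sV (*) l"
  show "l (sw sV (D h) (\<lambda>x y. sw sV (D x) (\<lambda>u v. F u v y))) =
        l (sw sV (D h) (\<lambda>x y. sw sV (D y) (\<lambda>u v. F x u v)))"
    using coassoc_k[OF trilin_comp[OF F l], of h] by (simp add: sw_linear_map[OF l])
qed

lemma dmult:
  assumes vs: "vector_space sV" and F: "bilin sH sH sV F"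
  shows "sw sV (D (k * h)) F = sw sV (D k) (\<lambda>x y. sw sV (D h) (\<lambda>u v. F (x * u) (y * v)))"
proof (rule sep[OF vs])
  fix l :: "_ \<Rightarrow> 'k" assume l: "lin sV (*) l"
  show "l (sw sV (D (k * h)) F) = l (sw sV (D k) (\<lambda>x y. sw sV (D h) (\<lambda>u v. F (x * u) (y * v))))"
    using dmult_k[OF bilin_comp[OF F l], of k h] by (simp add: sw_linear_map[OF l])
qed

lemma wcomult1:
  assumes vs: "vector_space sV" and F: "trilin sH sH sH sV F"
  shows "sw sV (D 1) (\<lambda>x y. sw sV (D 1) (\<lambda>u v. F x (u * y) v)) =
          sw sV (D 1) (\<lambda>x y. sw sV (D x) (\<lambda>u v. F u v y))"
proof (rule sep[OF vs])
  fix l :: "_ \<Rightarrow> 'k" assume l: "lin sV (*) l"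
  show "l (sw sV (D 1) (\<lambda>x y. sw sV (D 1) (\<lambda>u v. F x (u * y) v))) =
          l (sw sV (D 1) (\<lambda>x y. sw sV (D x) (\<lambda>u v. F u v y)))"
    using conjunct1[OF wcomult_k[OF trilin_comp[OF F l]]] by (simp add: sw_linear_map[OF l])
qed

lemma wcomult2:
  assumes vs: "vector_space sV" and F: "trilin sH sH sH sV F"
  shows "sw sV (D 1) (\<lambda>x y. sw sV (D 1) (\<lambda>u v. F x (y * u) v)) =
          sw sV (D 1) (\<lambda>x y. sw sV (D x) (\<lambda>u v. F u v y))"
proof (rule sep[OF vs])
  fix l :: "_ \<Rightarrow> 'k" assume l: "lin sV (*) l"
  show "l (sw sV (D 1) (\<lambda>x y. sw sV (D 1) (\<lambda>u v. F x (y * u) v))) =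
          l (sw sV (D 1) (\<lambda>x y. sw sV (D x) (\<lambda>u v. F u v y)))"
    using conjunct2[OF wcomult_k[OF trilin_comp[OF F l]], symmetric] by (simp add: sw_linear_map[OF l])
qed


lemma vsH': "vector_space sH" by (rule vsH)
declare vsH'[li] kaH[li]

lemma lS[li]: "lin s sH f \<Longrightarrow> lin s sH (\<lambda>x. S (f x))" by (rule lin_comp[OF lin_S])
lemma leps[li]: "lin s sH f \<Longrightarrow> lin s (*) (\<lambda>x. eps (f x))" by (rule lin_comp[OF lin_eps])
lemma lD[li]: "bilin sH sH t G \<Longrightarrow> vector_space t \<Longrightarrow> lin s sH f \<Longrightarrow> lin s t (\<lambda>x. sw t (D (f x)) G)"
  by (rule lin_comp[OF linD])

lemma lin_et: "lin sH sH et"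
proof -
  have "lin sH sH (\<lambda>h. sw sH (D 1) (\<lambda>x y. sH (eps (x * h)) y))" by (intro li)
  then show ?thesis unfolding eps_t_def .
qed
lemma lin_es: "lin sH sH es"
proof -
  have "lin sH sH (\<lambda>h. sw sH (D 1) (\<lambda>x y. sH (eps (h * y)) x))" by (intro li)
  then show ?thesis unfolding eps_s_def .
qed
lemma l_et[li]: "lin s sH f \<Longrightarrow> lin s sH (\<lambda>x. et (f x))" by (rule lin_comp[OF lin_et])
lemma l_es[li]: "lin s sH f \<Longrightarrow> lin s sH (\<lambda>x. es (f x))" by (rule lin_comp[OF lin_es])

lemma et1: "et 1 = 1" unfolding eps_t_def using counit1[of 1] by simp
lemma es1: "es 1 = 1" unfolding eps_s_def using counit2[of 1] by simp

lemma sH_ml[simp]: "sH c x * y = sH c (x * y)" by (rule ka_ml[OF kaH])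
lemma sH_mr[simp]: "x * sH c y = sH c (x * y)" by (rule ka_mr[OF kaH])
lemma eps_sc[simp]: "eps (sH c x) = c * eps x" by (rule lin_scale[OF lin_eps])
lemma S_sc[simp]: "S (sH c x) = sH c (S x)" by (rule lin_scale[OF lin_S])
lemma et_sc[simp]: "et (sH c x) = sH c (et x)" by (rule lin_scale[OF lin_et])
lemma es_sc[simp]: "es (sH c x) = sH c (es x)" by (rule lin_scale[OF lin_es])

lemma pull:
  assumes "lin sH sV L"
  shows "sw sV T (\<lambda>x y. sV (c x y) (L (f x y))) = L (sw sH T (\<lambda>x y. sH (c x y) (f x y)))"
  by (simp add: sw_linear_map[OF assms] lin_scale[OF assms])

lemma et_et: "et (h * et g) = et (h * g)"
proof -
  have "eps (x * (h * et g)) = eps (x * (h * g))" for x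
  proof -
    have "eps (x * (h * et g)) = sw (*) (D 1) (\<lambda>u v. eps (x * h * sH (eps (u * g)) v))"
      unfolding eps_t_def mult.assoc[symmetric]
      by (rule sw_linear_map) (intro li)
    also have "\<dots> = sw (*) (D 1) (\<lambda>u v. eps (x * h * v) * eps (u * g))"
      by (simp add: mult.commute)
    also have "\<dots> = eps (x * h * 1 * g)" by (rule epsm2[symmetric])
    finally show ?thesis by (simp add: mult.assoc)
  qed
  then show ?thesis unfolding eps_t_def[of D eps sH "h * et g"] eps_t_def[of D eps sH "h * g"] by simp
qed

lemma es_es: "es (es h * g) = es (h * g)"
proof -
  have "eps (es h * g * y) = eps (h * g * y)" for y
  proof -
    have "eps (es h * g * y) = sw (*) (D 1) (\<lambda>u v. eps (sH (eps (h * v)) u * (g * y)))"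
      unfolding eps_s_def mult.assoc
      by (rule sw_linear_map) (intro li)
    also have "\<dots> = sw (*) (D 1) (\<lambda>u v. eps (h * v) * eps (u * (g * y)))"
      by simp
    also have "\<dots> = eps (h * 1 * (g * y))" by (rule epsm2[symmetric])
    finally show ?thesis by (simp add: mult.assoc)
  qed
  then show ?thesis unfolding eps_s_def[of D eps sH "es h * g"] eps_s_def[of D eps sH "h * g"] by simp
qed


lemma D_et:
  assumes vs: "vector_space sV" and G: "bilin sH sH sV G"
  shows "sw sV (D (et g)) G = sw sV (D 1) (\<lambda>u v. G (u * et g) v)"
proof -
  have e: "et g = sw sH (D 1) (\<lambda>x y. sH (eps (x*g)) y)" by (simp add: eps_t_def)
  have "sw sV (D (et g)) G = sw sV (D 1) (\<lambda>x y. sw sV (D (sH (eps (x*g)) y)) G)"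
    by (subst e) (rule sw_linear_map[OF linD[OF vs G]])
  also have "\<dots> = sw sV (D 1) (\<lambda>x y. sw sV (D y) (\<lambda>u v. sV (eps (x*g)) (G u v)))"
    by (simp add: lin_scale[OF linD[OF vs G]] sw_scale[OF vs])
  also have "\<dots> = sw sV (D 1) (\<lambda>x y. sw sV (D x) (\<lambda>u v. sV (eps (u*g)) (G v y)))"
    by (rule sym, rule coassoc[OF vs, where F="\<lambda>a b c. sV (eps (a*g)) (G b c)"])
      (intro li vs bilinD1[OF G] bilinD2[OF G])
  also have "\<dots> = sw sV (D 1) (\<lambda>x y. sw sV (D 1) (\<lambda>u v. sV (eps (x*g)) (G (u*y) v)))"
    by (rule sym, rule wcomult1[OF vs, where F="\<lambda>a b c. sV (eps (a*g)) (G b c)"])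
      (intro li vs bilinD1[OF G] bilinD2[OF G])
  also have "\<dots> = sw sV (D 1) (\<lambda>u v. sw sV (D 1) (\<lambda>x y. sV (eps (x*g)) (G (u*y) v)))"
    by (rule sw_swap[OF vs])
  also have "\<dots> = sw sV (D 1) (\<lambda>u v. G (u * et g) v)"
  proof (rule sw_cong)
    fix u v
    have L: "lin sH sV (\<lambda>m. G (u*m) v)" by (intro li vs bilinD1[OF G] lin_compD1[OF G])
    show "sw sV (D 1) (\<lambda>x y. sV (eps (x*g)) (G (u*y) v)) = G (u * et g) v"
      using pull[OF L, of "D 1" "\<lambda>x y. eps (x*g)" "\<lambda>x y. y"] by (simp add: e)
  qed
  finally show ?thesis .
qed

lemma D_es:
  assumes vs: "vector_space sV" and G: "bilin sH sH sV G"
  shows "sw sV (D (es k)) G = sw sV (D 1) (\<lambda>u v. G u (es k * v))"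
proof -
  have e: "es k = sw sH (D 1) (\<lambda>u v. sH (eps (k*v)) u)" by (simp add: eps_s_def)
  have "sw sV (D (es k)) G = sw sV (D 1) (\<lambda>x y. sw sV (D (sH (eps (k*y)) x)) G)"
    by (subst e) (rule sw_linear_map[OF linD[OF vs G]])
  also have "\<dots> = sw sV (D 1) (\<lambda>x y. sw sV (D x) (\<lambda>u v. sV (eps (k*y)) (G u v)))"
    by (simp add: lin_scale[OF linD[OF vs G]] sw_scale[OF vs])
  also have "\<dots> = sw sV (D 1) (\<lambda>x y. sw sV (D 1) (\<lambda>u v. sV (eps (k*v)) (G x (u*y))))"
    by (rule sym, rule wcomult1[OF vs, where F="\<lambda>a b c. sV (eps (k*c)) (G a b)"])
      (intro li vs bilinD1[OF G] bilinD2[OF G])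
  also have "\<dots> = sw sV (D 1) (\<lambda>x y. G x (es k * y))"
  proof (rule sw_cong)
    fix x y
    have L: "lin sH sV (\<lambda>m. G x (m*y))" by (intro li vs bilinD2[OF G] lin_compD2[OF G])
    show "sw sV (D 1) (\<lambda>u v. sV (eps (k*v)) (G x (u*y))) = G x (es k * y)"
      using pull[OF L, of "D 1" "\<lambda>u v. eps (k*v)" "\<lambda>u v. u"] by (simp add: e)
  qed
  finally show ?thesis .
qed

lemma D_het:
  assumes vs: "vector_space sV" and F: "bilin sH sH sV F"
  shows "sw sV (D (h * et g)) F = sw sV (D h) (\<lambda>x y. F (x * et g) y)"
proof -
  have "sw sV (D (h * et g)) F = sw sV (D h) (\<lambda>x y. sw sV (D (et g)) (\<lambda>u v. F (x*u) (y*v)))"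
    by (rule dmult[OF vs F])
  also have "\<dots> = sw sV (D h) (\<lambda>x y. sw sV (D 1) (\<lambda>u v. F (x*(u * et g)) (y*v)))"
    by (rule sw_cong, rule D_et[OF vs]) (intro li lin_compD1[OF F] lin_compD2[OF F])
  also have "\<dots> = sw sV (D (h * 1)) (\<lambda>a b. F (a * et g) b)"
    by (rule sym, subst dmult[OF vs]) (auto simp: mult.assoc intro!: li lin_compD1[OF F] lin_compD2[OF F] bilinD2[OF F])
  finally show ?thesis by simp
qed

lemma D_esg:
  assumes vs: "vector_space sV" and F: "bilin sH sH sV F"
  shows "sw sV (D (es k * g)) F = sw sV (D g) (\<lambda>p q. F p (es k * q))"
proof -
  have "sw sV (D (es k * g)) F = sw sV (D (es k)) (\<lambda>x x'. sw sV (D g) (\<lambda>p q. F (x*p) (x'*q)))"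
    by (rule dmult[OF vs F])
  also have "\<dots> = sw sV (D 1) (\<lambda>u v. sw sV (D g) (\<lambda>p q. F (u*p) (es k * v * q)))"
    by (rule D_es[OF vs]) (intro li vs lin_compD1[OF F] lin_compD2[OF F])
  also have "\<dots> = sw sV (D (1 * g)) (\<lambda>a b. F a (es k * b))"
    by (rule sym, subst dmult[OF vs]) (auto simp: mult.assoc intro!: li lin_compD1[OF F] lin_compD2[OF F] bilinD1[OF F])
  finally show ?thesis by simp
qed

lemma C_et: "et (h * et g) = sw sH (D h) (\<lambda>x y. x * et g * S y)"
  using anti1[of "h * et g"] D_het[OF vsH, of "\<lambda>a b. a * S b" h g]
  by (simp add: bilinI li)

lemma C_es: "es (es k * g) = sw sH (D g) (\<lambda>p q. S p * es k * q)"
proof -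
  have "bilin sH sH sH (\<lambda>a b. S a * b)" by (intro li)
  then show ?thesis using anti2[of "es k * g"] D_esg[OF vsH, of "\<lambda>a b. S a * b" k g]
    by (simp add: mult.assoc)
qed


lemma comm: "et a * es b = es b * et a"
proof -
  define F where "F = (\<lambda>x m v. sH (eps (x*a) * eps (b*v)) m)"
  have T: "trilin sH sH sH sH F" unfolding F_def by (intro li)
  have eq: "sw sH (D 1) (\<lambda>x y. sw sH (D 1) (\<lambda>u v. F x (u * y) v)) =
            sw sH (D 1) (\<lambda>x y. sw sH (D 1) (\<lambda>u v. F x (y * u) v))"
    using wcomult1[OF vsH T] wcomult2[OF vsH T] by simp
  have 1: "es b * et a = sw sH (D 1) (\<lambda>x y. sw sH (D 1) (\<lambda>u v. F x (u * y) v))"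
    unfolding eps_s_def eps_t_def F_def
    by (simp add: sw_mult_right[OF kaH] sw_mult_left[OF kaH] vs_ss[OF vsH] sw_scale[OF vsH])
  have 2: "et a * es b = sw sH (D 1) (\<lambda>x y. sw sH (D 1) (\<lambda>u v. F x (y * u) v))"
    unfolding eps_s_def eps_t_def F_def
    apply (simp add: sw_mult_right[OF kaH] sw_mult_left[OF kaH] vs_ss[OF vsH] sw_scale[OF vsH])
    apply (rule trans[OF sw_swap[OF vsH]])
    apply (intro sw_cong)
    apply (simp add: mult.commute)
    done
  show ?thesis using 1 2 eq by simp
qed

lemma et_in: "z \<in> Ht D eps sH \<Longrightarrow> et z = z"
proof -
  assume "z \<in> Ht D eps sH"
  then obtain g where z: "z = et g" unfolding Ht_def by auto
  show ?thesis using et_et[of 1 g] z by simp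
qed

lemma es_in: "y \<in> Hs D eps sH \<Longrightarrow> es y = y"
proof -
  assume "y \<in> Hs D eps sH"
  then obtain g where y: "y = es g" unfolding Hs_def by auto
  show ?thesis using es_es[of g 1] y by simp
qed


end




lemma sw_superset:
  assumes "finite K" "Poly_Mapping.keys X \<subseteq> K" "vector_space t"
  shows "sw t X f = (\<Sum>p\<in>K. t (Poly_Mapping.lookup X p) (f (fst p) (snd p)))"
  unfolding sw_def
proof (rule sum.mono_neutral_left[OF assms(1,2)])
  show "\<forall>i\<in>K - Poly_Mapping.keys X. t (Poly_Mapping.lookup X i) (f (fst i) (snd i)) = 0"
    using assms(3) by (simp add: vector_space.scale_eq_0_iff in_keys_iff)
qed

lemma sw_add_T: "vector_space t \<Longrightarrow> sw t (X + Y) f = sw t X f + sw t Y f"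
proof -
  assume vs: "vector_space t"
  let ?K = "Poly_Mapping.keys X \<union> Poly_Mapping.keys Y"
  have f: "finite ?K" by simp
  have k: "Poly_Mapping.keys (X + Y) \<subseteq> ?K" by (rule keys_add)
  show ?thesis
    using vs
    by (simp add: sw_superset[OF f k vs] sw_superset[OF f _ vs, of X] sw_superset[OF f _ vs, of Y]
        lookup_add vector_space.vector_space_assms(2) sum.distrib)
qed

lemma sw_zero_T: "sw t 0 f = 0" unfolding sw_def by simp

lemma sw_single: "vector_space t \<Longrightarrow> sw t (Poly_Mapping.single p c) f = t c (f (fst p) (snd p))"
  unfolding sw_def by (cases "c = 0") (auto simp: vector_space.scale_eq_0_iff)

lemma sw_sum_T: "vector_space t \<Longrightarrow> sw t (\<Sum>i\<in>I. X i) f = (\<Sum>i\<in>I. sw t (X i) f)"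
proof -
  assume vs: "vector_space t"
  show ?thesis
  proof (induction I rule: infinite_finite_induct)
    case (infinite A) then show ?case by (simp add: sw_zero_T)
  next
    case empty then show ?case by (simp add: sw_zero_T)
  next
    case (insert x F) then show ?case by (simp add: sw_add_T[OF vs])
  qed
qed

lemma sw_sscale: assumes vs: "vector_space t" shows "sw t (sscale c X) f = t c (sw t X f)"
proof -
  have "sw t (sscale c X) f = (\<Sum>p\<in>Poly_Mapping.keys X. sw t (Poly_Mapping.single p (c * Poly_Mapping.lookup X p)) f)"
    unfolding sscale_def by (rule sw_sum_T[OF vs])
  also have "\<dots> = t c (sw t X f)"
    by (simp only: sw_single[OF vs] fst_conv snd_conv) (simp add: sw_def vs_sum_right[OF vs] vs_ss[OF vs])
  finally show ?thesis .
qed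

lemma sw_stens: "vector_space t \<Longrightarrow> sw t (stens a h) f = f a h"
  unfolding stens_def by (simp add: sw_single vector_space.vector_space_assms(4))

lemma sw_smult: assumes vs: "vector_space t" shows
  "sw t (smult D act X Y) f = sw t X (\<lambda>a h. sw t Y (\<lambda>b g. sw t (D h) (\<lambda>x y. f (a * act x b) (y * g))))"
  unfolding smult_def
  apply (simp only: sw_sum_T[OF vs] sw_single[OF vs] fst_conv snd_conv)
  apply (simp add: sw_def vs_sum_right[OF vs] vs_ss[OF vs] mult.assoc)
  done


context wha begin
lemma et_C: "et (h * g) = sw sH (D h) (\<lambda>p q. p * et g * S q)"
  using et_et[of h g] C_et[of h g] by simp
lemma es_C: "es (h * g) = sw sH (D g) (\<lambda>p q. S p * es h * q)"
  using es_es[of h g] C_es[of h g] by simp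

lemma Sx_et: "sw sH (D h) (\<lambda>x y. S x * et y) = S h"
proof -
  have "S h = sw sH (D h) (\<lambda>x y. sw sH (D y) (\<lambda>u v. S x * u * S v))" by (rule anti3)
  also have "\<dots> = sw sH (D h) (\<lambda>x y. S x * et y)"
    by (rule sw_cong) (simp add: anti1[symmetric] sw_mult_left[OF kaH] mult.assoc)
  finally show ?thesis by simp
qed

lemma es_S: "sw sH (D h) (\<lambda>x y. es x * S y) = S h"
proof -
  have "sw sH (D h) (\<lambda>x y. es x * S y) = sw sH (D h) (\<lambda>x y. sw sH (D x) (\<lambda>a b. S a * b * S y))"
    by (rule sw_cong) (simp add: anti2[symmetric] sw_mult_right[OF kaH])
  also have "\<dots> = sw sH (D h) (\<lambda>x y. sw sH (D y) (\<lambda>a b. S x * a * S b))"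
    by (rule coassoc[OF vsH]) (intro li)
  also have "\<dots> = S h" by (rule anti3[symmetric])
  finally show ?thesis .
qed

lemma S_mult: "S (h * g) = S g * S h"
proof -
  have c5: "\<And>y. sw sH (D y) (\<lambda>p q. sw sH (D g) (\<lambda>x2 y2. S (x1*x2) * (p * et y2 * S q))) = 
     sw sH (D g) (\<lambda>x2 y2. S (x1*x2) * sw sH (D y) (\<lambda>p q. p * et y2 * S q))" for x1
    by (simp only: sw_mult_left[OF kaH] sw_swap[OF vsH, of "D g"])
  have c7: "sw sH (D g) (\<lambda>x2 y2. sw sH (D y2) (\<lambda>p q. S (a*x2) * (b * (p * S q) * S y))) =
      sw sH (D g) (\<lambda>x2 y2. sw sH (D x2) (\<lambda>a' b'. S (a*a') * (b * (b' * S y2) * S y)))" for a b y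
    by (rule sym, rule coassoc[OF vsH, where F="\<lambda>a' b' c. S (a*a') * (b * (b' * S c) * S y)"]) (intro li)
  have c8: "sw sH (D x) (\<lambda>a b. sw sH (D g) (\<lambda>x2 y2. sw sH (D x2) (\<lambda>a' b'. S (a*a') * (b * (b' * S y2) * S y)))) =
     sw sH (D g) (\<lambda>x2 y2. es (x*x2) * S y2 * S y)" for x y
  proof -
    have "sw sH (D x) (\<lambda>a b. sw sH (D g) (\<lambda>x2 y2. sw sH (D x2) (\<lambda>a' b'. S (a*a') * (b * (b' * S y2) * S y)))) =
       sw sH (D g) (\<lambda>x2 y2. sw sH (D x) (\<lambda>a b. sw sH (D x2) (\<lambda>a' b'. S (a*a') * (b * (b' * S y2) * S y))))"
      by (rule sw_swap[OF vsH])
    also have "\<dots> = sw sH (D g) (\<lambda>x2 y2. sw sH (D (x*x2)) (\<lambda>m n. S m * n * S y2 * S y))"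
    proof -
      have "sw sH (D (x*x2)) (\<lambda>m n. S m * n * S y2 * S y) =
         sw sH (D x) (\<lambda>a b. sw sH (D x2) (\<lambda>a' b'. S (a*a') * (b * (b' * S y2) * S y)))" for x2 y2
        by (subst dmult[OF vsH, where F="\<lambda>m n. S m * n * S y2 * S y"]) (intro li, simp add: mult.assoc)
      then show ?thesis by simp
    qed
    also have "\<dots> = sw sH (D g) (\<lambda>x2 y2. es (x*x2) * S y2 * S y)"
      by (simp add: anti2[symmetric] sw_mult_right[OF kaH])
    finally show ?thesis .
  qed
  have c10: "sw sH (D g) (\<lambda>x2 y2. sw sH (D x2) (\<lambda>p q. S p * es x * q * S y2 * S y)) =
     sw sH (D g) (\<lambda>x2 y2. sw sH (D y2) (\<lambda>p q. S x2 * es x * p * S q * S y))" for x y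
    by (rule coassoc[OF vsH, where F="\<lambda>p q c. S p * es x * q * S c * S y"]) (intro li)
  have c11: "sw sH (D y2) (\<lambda>p q. S x2 * es x * p * S q * S y) = S x2 * et y2 * (es x * S y)" for x y x2 y2
  proof -
    have "sw sH (D y2) (\<lambda>p q. S x2 * es x * p * S q * S y) = S x2 * es x * sw sH (D y2) (\<lambda>p q. p * S q) * S y"
      by (simp add: sw_mult_left[OF kaH] sw_mult_right[OF kaH] mult.assoc)
    also have "\<dots> = S x2 * (es x * et y2) * S y" by (simp add: anti1 mult.assoc)
    also have "\<dots> = S x2 * et y2 * (es x * S y)" by (simp only: comm[of y2 x, symmetric]) (simp add: mult.assoc)
    finally show ?thesis .
  qed
  have "S (h * g) = sw sH (D (h * g)) (\<lambda>x y. S x * et y)" by (rule Sx_et[symmetric])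
  also have "\<dots> = sw sH (D h) (\<lambda>x1 y1. sw sH (D g) (\<lambda>x2 y2. S (x1*x2) * et (y1*y2)))"
    by (rule dmult[OF vsH, where F="\<lambda>x y. S x * et y"]) (intro li)
  also have "\<dots> = sw sH (D h) (\<lambda>x1 y1. sw sH (D g) (\<lambda>x2 y2. S (x1*x2) * sw sH (D y1) (\<lambda>p q. p * et y2 * S q)))"
    by (simp only: et_C)
  also have "\<dots> = sw sH (D h) (\<lambda>x1 y1. sw sH (D y1) (\<lambda>p q. sw sH (D g) (\<lambda>x2 y2. S (x1*x2) * (p * et y2 * S q))))"
    by (simp only: c5)
  also have "\<dots> = sw sH (D h) (\<lambda>x y. sw sH (D x) (\<lambda>a b. sw sH (D g) (\<lambda>x2 y2. S (a*x2) * (b * et y2 * S y))))"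
    by (rule sym, rule coassoc[OF vsH, where F="\<lambda>a b c. sw sH (D g) (\<lambda>x2 y2. S (a*x2) * (b * et y2 * S c))"]) (intro li)
  also have "\<dots> = sw sH (D h) (\<lambda>x y. sw sH (D x) (\<lambda>a b. sw sH (D g) (\<lambda>x2 y2. sw sH (D y2) (\<lambda>p q. S (a*x2) * (b * (p * S q) * S y)))))"
    by (simp add: anti1[symmetric] sw_mult_left[OF kaH] sw_mult_right[OF kaH])
  also have "\<dots> = sw sH (D h) (\<lambda>x y. sw sH (D x) (\<lambda>a b. sw sH (D g) (\<lambda>x2 y2. sw sH (D x2) (\<lambda>a' b'. S (a*a') * (b * (b' * S y2) * S y)))))"
    by (simp only: c7)
  also have "\<dots> = sw sH (D h) (\<lambda>x y. sw sH (D g) (\<lambda>x2 y2. es (x*x2) * S y2 * S y))"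
    by (simp only: c8)
  also have "\<dots> = sw sH (D h) (\<lambda>x y. sw sH (D g) (\<lambda>x2 y2. sw sH (D x2) (\<lambda>p q. S p * es x * q * S y2 * S y)))"
    by (simp add: es_C sw_mult_right[OF kaH])
  also have "\<dots> = sw sH (D h) (\<lambda>x y. sw sH (D g) (\<lambda>x2 y2. sw sH (D y2) (\<lambda>p q. S x2 * es x * p * S q * S y)))"
    by (simp only: c10)
  also have "\<dots> = sw sH (D h) (\<lambda>x y. sw sH (D g) (\<lambda>x2 y2. S x2 * et y2 * (es x * S y)))"
    by (simp only: c11)
  also have "\<dots> = sw sH (D h) (\<lambda>x y. sw sH (D g) (\<lambda>x2 y2. S x2 * et y2) * (es x * S y))"
    by (simp add: sw_mult_right[OF kaH])
  also have "\<dots> = sw sH (D g) (\<lambda>x2 y2. S x2 * et y2) * sw sH (D h) (\<lambda>x y. es x * S y)"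
    by (simp add: sw_mult_left[OF kaH] mult.assoc)
  also have "\<dots> = S g * S h" by (simp add: Sx_et es_S)
  finally show ?thesis .
qed


lemma Dfl:
  assumes vs: "vector_space sV" and G: "bilin sH sH sV G"
  shows "sw sV (D 1) (\<lambda>x y. G (es x) y) = sw sV (D 1) G"
proof -
  define F where "F = (\<lambda>p q r. sV (eps q) (G p r))"
  have T: "trilin sH sH sH sV F" unfolding F_def by (intro li vs bilinD1[OF G] bilinD2[OF G])
  have "G (es x) y = sw sV (D 1) (\<lambda>u v. sV (eps (x*v)) (G u y))" for x y
  proof -
    have L: "lin sH sV (\<lambda>m. G m y)" by (rule bilinD1[OF G])
    show ?thesis using pull[OF L, of "D 1" "\<lambda>u v. eps (x*v)" "\<lambda>u v. u"] by (simp add: eps_s_def)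
  qed
  then have "sw sV (D 1) (\<lambda>x y. G (es x) y) = sw sV (D 1) (\<lambda>x y. sw sV (D 1) (\<lambda>u v. sV (eps (x*v)) (G u y)))"
    by simp
  also have "\<dots> = sw sV (D 1) (\<lambda>x y. sw sV (D 1) (\<lambda>u v. F x (u * y) v))"
    unfolding F_def by (rule sw_swap[OF vs])
  also have "\<dots> = sw sV (D 1) (\<lambda>x y. sw sV (D x) (\<lambda>u v. F u v y))" by (rule wcomult1[OF vs T])
  also have "\<dots> = sw sV (D 1) G"
  proof -
    have "sw sV (D x) (\<lambda>u v. F u v y) = G x y" for x y
    proof -
      have L: "lin sH sV (\<lambda>m. G m y)" by (rule bilinD1[OF G])
      show ?thesis using pull[OF L, of "D x" "\<lambda>u v. eps v" "\<lambda>u v. u"] by (simp add: F_def counit2)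
    qed
    then show ?thesis by simp
  qed
  finally show ?thesis .
qed

lemma sw_scal: "vector_space t \<Longrightarrow> sw t T (\<lambda>x y. t (c x y) v) = t (sw (*) T c) v"
  by (rule sym, rule sw_linear_map) (intro li)

lemma flip:
  assumes vs: "vector_space sV" and G: "bilin sH sH sV G"
  shows "sw sV (D 1) (\<lambda>x y. G (et x) (es y)) = sw sV (D 1) (\<lambda>x y. G y x)"
proof -
  have 1: "G (et x) (es y) = sw sV (D 1) (\<lambda>a b. sw sV (D 1) (\<lambda>c d. sV (eps (a*x) * eps (y*d)) (G b c)))" for x y
  proof -
    have L1: "lin sH sV (\<lambda>m. G m (es y))" by (rule bilinD1[OF G])
    have "G (et x) (es y) = sw sV (D 1) (\<lambda>a b. sV (eps (a*x)) (G b (es y)))"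
      using pull[OF L1, of "D 1" "\<lambda>a b. eps (a*x)" "\<lambda>a b. b"] by (simp add: eps_t_def)
    also have "\<dots> = sw sV (D 1) (\<lambda>a b. sV (eps (a*x)) (sw sV (D 1) (\<lambda>c d. sV (eps (y*d)) (G b c))))"
    proof -
      have "G b (es y) = sw sV (D 1) (\<lambda>c d. sV (eps (y*d)) (G b c))" for b
      proof -
        have L2: "lin sH sV (\<lambda>m. G b m)" by (rule bilinD2[OF G])
        show ?thesis using pull[OF L2, of "D 1" "\<lambda>c d. eps (y*d)" "\<lambda>c d. c"] by (simp add: eps_s_def)
      qed
      then show ?thesis by simp
    qed
    also have "\<dots> = sw sV (D 1) (\<lambda>a b. sw sV (D 1) (\<lambda>c d. sV (eps (a*x) * eps (y*d)) (G b c)))"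
      by (simp add: sw_scale[OF vs] vs_ss[OF vs])
    finally show ?thesis .
  qed
  have "sw sV (D 1) (\<lambda>x y. G (et x) (es y)) =
      sw sV (D 1) (\<lambda>x y. sw sV (D 1) (\<lambda>a b. sw sV (D 1) (\<lambda>c d. sV (eps (a*x) * eps (y*d)) (G b c))))"
    by (simp only: 1)
  also have "\<dots> = sw sV (D 1) (\<lambda>a b. sw sV (D 1) (\<lambda>x y. sw sV (D 1) (\<lambda>c d. sV (eps (a*x) * eps (y*d)) (G b c))))"
    by (rule sw_swap[OF vs])
  also have "\<dots> = sw sV (D 1) (\<lambda>a b. sw sV (D 1) (\<lambda>c d. sw sV (D 1) (\<lambda>x y. sV (eps (a*x) * eps (y*d)) (G b c))))"
    by (simp only: sw_swap[OF vs, of "D 1" "D 1" "\<lambda>x y c d. sV (eps (_*x) * eps (y*d)) (G _ c)"])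
  also have "\<dots> = sw sV (D 1) (\<lambda>a b. sw sV (D 1) (\<lambda>c d. sV (eps (a*d)) (G b c)))"
    by (simp add: sw_scal[OF vs] epsm1[of 1, simplified])
  also have "\<dots> = sw sV (D 1) (\<lambda>a b. G b (es a))"
  proof -
    have "sw sV (D 1) (\<lambda>c d. sV (eps (a*d)) (G b c)) = G b (es a)" for a b
    proof -
      have L2: "lin sH sV (\<lambda>m. G b m)" by (rule bilinD2[OF G])
      show ?thesis using pull[OF L2, of "D 1" "\<lambda>c d. eps (a*d)" "\<lambda>c d. c"] by (simp add: eps_s_def)
    qed
    then show ?thesis by simp
  qed
  also have "\<dots> = sw sV (D 1) (\<lambda>a b. G b a)"
    by (rule Dfl[OF vs, where G="\<lambda>p q. G q p"]) (intro li bilinD1[OF G] bilinD2[OF G])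
  finally show ?thesis .
qed

lemma S_Hs: "w \<in> Hs D eps sH \<Longrightarrow> S w = et w"
proof -
  assume "w \<in> Hs D eps sH"
  then obtain k where w: "w = es k" unfolding Hs_def by auto
  have "et w = sw sH (D w) (\<lambda>x y. x * S y)" by (rule anti1[symmetric])
  also have "\<dots> = sw sH (D 1) (\<lambda>u v. u * S (es k * v))"
    unfolding w by (rule D_es[OF vsH]) (intro li)
  also have "\<dots> = sw sH (D 1) (\<lambda>u v. u * S v) * S w"
    by (simp add: S_mult sw_mult_right[OF kaH] mult.assoc w)
  also have "\<dots> = S w" by (simp add: anti1 et1)
  finally show ?thesis by simp
qed

lemma surj_SR: "z \<in> Ht D eps sH \<Longrightarrow> z \<in> S ` Hs D eps sH"
proof -
  assume "z \<in> Ht D eps sH"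
  then obtain g where z: "z = et g" unfolding Ht_def by auto
  define w where "w = sw sH (D 1) (\<lambda>x y. sH (eps (es y * g)) x)"
  have "es w = sw sH (D 1) (\<lambda>x y. sH (eps (es y * g)) (es x))"
    unfolding w_def by (rule sw_linear_map[OF lin_es, THEN trans]) (simp add: lin_scale[OF lin_es])
  also have "\<dots> = w" unfolding w_def
    by (rule Dfl[OF vsH, where G="\<lambda>p q. sH (eps (es q * g)) p"]) (intro li)
  finally have wHs: "w \<in> Hs D eps sH" unfolding Hs_def by (metis rangeI)
  have "S w = et w" by (rule S_Hs[OF wHs])
  also have "\<dots> = sw sH (D 1) (\<lambda>x y. sH (eps (es y * g)) (et x))"
    unfolding w_def by (rule sw_linear_map[OF lin_et, THEN trans]) (simp add: lin_scale[OF lin_et])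
  also have "\<dots> = sw sH (D 1) (\<lambda>x y. sH (eps (x * g)) y)"
    by (rule flip[OF vsH, where G="\<lambda>p q. sH (eps (q * g)) p"]) (intro li)
  also have "\<dots> = z" by (simp add: z eps_t_def)
  finally show ?thesis using wHs by blast
qed

end



locale setting = wha sH D eps S
  for sH :: "'k::field \<Rightarrow> 'h::{ring,monoid_mult} \<Rightarrow> 'h"
    and D :: "'h \<Rightarrow> ('h \<times> 'h \<Rightarrow>\<^sub>0 'k)"
    and eps :: "'h \<Rightarrow> 'k"
    and S :: "'h \<Rightarrow> 'h" +
  fixes sA :: "'k \<Rightarrow> 'a::{ring,monoid_mult} \<Rightarrow> 'a"
    and act :: "'h \<Rightarrow> 'a \<Rightarrow> 'a"
    and sB :: "'k \<Rightarrow> 'b::{ring,monoid_mult} \<Rightarrow> 'b"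
    and \<pi> :: "'h \<Rightarrow> 'b"
    and \<phi> :: "'a \<Rightarrow> 'b"
  assumes spma: "symmetric_partial_module_algebra sH D sA act"
    and kaB: "k_algebra sB"
    and pr: "partial_rep sH D S sB \<pi>"
    and ah: "alg_hom sA sB \<phi>"
    and cp: "covariant_pair sH D S sA act sB \<phi> \<pi>"
begin

lemma kaA: "k_algebra sA" using spma unfolding symmetric_partial_module_algebra_def partial_module_algebra_def by blast
lemma vsA: "vector_space sA" using kaA ka_vs by blast
lemma vsB: "vector_space sB" using kaB ka_vs by blast
lemma act_bil: "bilin sH sA sA act" using spma unfolding symmetric_partial_module_algebra_def partial_module_algebra_def by blast
lemma act_mult: "act h (a * b) = sw sA (D h) (\<lambda>x y. act x a * act y b)"
  using spma unfolding symmetric_partial_module_algebra_def partial_module_algebra_def by blast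
lemma act1: "act 1 a = a"
  using spma unfolding symmetric_partial_module_algebra_def partial_module_algebra_def by blast
lemma act_comp: "act h (act k a) = sw sA (D h) (\<lambda>x y. act x 1 * act (y * k) a)"
  using spma unfolding symmetric_partial_module_algebra_def partial_module_algebra_def by blast
lemma lin_pi: "lin sH sB \<pi>" using pr unfolding partial_rep_def by blast
lemma pi1: "\<pi> 1 = 1" using pr unfolding partial_rep_def by blast
lemma PR4: "sw sB (D h) (\<lambda>x y. \<pi> x * \<pi> (S y) * \<pi> k) = sw sB (D h) (\<lambda>x y. \<pi> x * \<pi> (S y * k))"
  using pr unfolding partial_rep_def by blast
lemma PR5: "sw sB (D h) (\<lambda>x y. \<pi> (S x) * \<pi> y * \<pi> k) = sw sB (D h) (\<lambda>x y. \<pi> (S x) * \<pi> (y * k))"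
  using pr unfolding partial_rep_def by blast
lemma PR6: "\<pi> h = sw sB (D h) (\<lambda>x y. sw sB (D y) (\<lambda>u v. \<pi> x * \<pi> (S u) * \<pi> v))"
  using pr unfolding partial_rep_def by blast
lemma lin_phi: "lin sA sB \<phi>" using ah unfolding alg_hom_def by blast
lemma phi1: "\<phi> 1 = 1" using ah unfolding alg_hom_def by blast
lemma phim: "\<phi> (a * b) = \<phi> a * \<phi> b" using ah unfolding alg_hom_def by blast
lemma CP1: "\<phi> (act h a) = sw sB (D h) (\<lambda>x y. \<pi> x * \<phi> a * \<pi> (S y))"
  using cp unfolding covariant_pair_def by blast
lemma CP2: "\<phi> a * sw sB (D h) (\<lambda>x y. \<pi> (S x) * \<pi> y) = sw sB (D h) (\<lambda>x y. \<pi> (S x) * \<pi> y) * \<phi> a"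
  using cp unfolding covariant_pair_def by blast

lemma vsA'[li]: "vector_space sA" by (rule vsA)
lemma vsB'[li]: "vector_space sB" by (rule vsB)
declare kaA[li] kaB[li]
lemma lpi[li]: "lin s sH f \<Longrightarrow> lin s sB (\<lambda>x. \<pi> (f x))" by (rule lin_comp[OF lin_pi])
lemma lphi[li]: "lin s sA f \<Longrightarrow> lin s sB (\<lambda>x. \<phi> (f x))" by (rule lin_comp[OF lin_phi])
lemma lact1[li]: "lin s sH f \<Longrightarrow> lin s sA (\<lambda>x. act (f x) a)" by (rule lin_comp[OF bilinD1[OF act_bil]])
lemma lact2[li]: "lin s sA f \<Longrightarrow> lin s sA (\<lambda>x. act h (f x))" by (rule lin_comp[OF bilinD2[OF act_bil]])

lemma sB_ml[simp]: "sB c x * y = sB c (x * y)" by (rule ka_ml[OF kaB])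
lemma sB_mr[simp]: "x * sB c y = sB c (x * y)" by (rule ka_mr[OF kaB])
lemma pi_sc[simp]: "\<pi> (sH c x) = sB c (\<pi> x)" by (rule lin_scale[OF lin_pi])

lemma M_ident: "sw sB (D h) (\<lambda>x y. \<phi> (a * act x b) * \<pi> (y * g)) = \<phi> a * \<pi> h * \<phi> b * \<pi> g"
proof -
  have i1: "sw sB (D y) (\<lambda>u v. \<pi> x * \<phi> b * \<pi> (S u) * \<pi> (v * g)) =
     sw sB (D y) (\<lambda>u v. \<pi> x * \<pi> (S u) * \<pi> v) * \<phi> b * \<pi> g" for x y
  proof -
    have "sw sB (D y) (\<lambda>u v. \<pi> x * \<phi> b * \<pi> (S u) * \<pi> (v * g)) =
        \<pi> x * \<phi> b * sw sB (D y) (\<lambda>u v. \<pi> (S u) * \<pi> (v * g))"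
      by (simp add: sw_mult_left[OF kaB] mult.assoc)
    also have "\<dots> = \<pi> x * \<phi> b * sw sB (D y) (\<lambda>u v. \<pi> (S u) * \<pi> v) * \<pi> g"
      by (simp add: PR5[symmetric] sw_mult_right[OF kaB] mult.assoc)
    also have "\<dots> = \<pi> x * sw sB (D y) (\<lambda>u v. \<pi> (S u) * \<pi> v) * \<phi> b * \<pi> g"
      by (simp add: CP2 mult.assoc)
    also have "\<dots> = sw sB (D y) (\<lambda>u v. \<pi> x * \<pi> (S u) * \<pi> v) * \<phi> b * \<pi> g"
      by (simp add: sw_mult_left[OF kaB] mult.assoc)
    finally show ?thesis .
  qed
  have "sw sB (D h) (\<lambda>x y. \<phi> (a * act x b) * \<pi> (y * g)) =
      \<phi> a * sw sB (D h) (\<lambda>x y. sw sB (D x) (\<lambda>u v. \<pi> u * \<phi> b * \<pi> (S v) * \<pi> (y * g)))"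
    by (simp add: phim CP1 sw_mult_left[OF kaB] sw_mult_right[OF kaB] mult.assoc)
  also have "\<dots> = \<phi> a * sw sB (D h) (\<lambda>x y. sw sB (D y) (\<lambda>u v. \<pi> x * \<phi> b * \<pi> (S u) * \<pi> (v * g)))"
    by (subst coassoc[OF vsB, where F="\<lambda>u v y. \<pi> u * \<phi> b * \<pi> (S v) * \<pi> (y * g)"]) (intro li, rule refl)
  also have "\<dots> = \<phi> a * (sw sB (D h) (\<lambda>x y. sw sB (D y) (\<lambda>u v. \<pi> x * \<pi> (S u) * \<pi> v)) * \<phi> b * \<pi> g)"
    by (simp only: i1 sw_mult_right[OF kaB])
  also have "\<dots> = \<phi> a * \<pi> h * \<phi> b * \<pi> g" by (simp only: PR6[symmetric]) (simp add: mult.assoc)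
  finally show ?thesis .
qed


lemma psw: "vector_space t \<Longrightarrow> sw t (pstens D act a h) G = sw t (D h) (\<lambda>x y. G (a * act x 1) y)"
  unfolding pstens_def by (simp add: sw_smult sw_stens)

lemma W3:
  assumes wHs: "w \<in> Hs D eps sH"
  shows "\<phi> (act w 1) * \<pi> h = \<pi> (S w * h)"
proof -
  obtain k where w: "w = es k" using wHs unfolding Hs_def by auto
  have s1: "\<phi> (act w 1) = sw sB (D 1) (\<lambda>x y. sB (eps (k*y)) (\<phi> (act x 1)))"
  proof -
    have L: "lin sH sB (\<lambda>m. \<phi> (act m 1))" by (intro li)
    show ?thesis using pull[OF L, of "D 1" "\<lambda>x y. eps (k*y)" "\<lambda>x y. x"] by (simp add: w eps_s_def)
  qed
  have "\<phi> (act w 1) * \<pi> h = sw sB (D 1) (\<lambda>x y. sB (eps (k*y)) (sw sB (D x) (\<lambda>u v. \<pi> u * \<pi> (S v) * \<pi> h)))"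
    by (simp only: s1) (simp add: CP1 phi1 sw_mult_right[OF kaB])
  also have "\<dots> = sw sB (D 1) (\<lambda>x y. sw sB (D x) (\<lambda>u v. sB (eps (k*y)) (\<pi> u * \<pi> (S v * h))))"
    by (simp add: PR4 sw_scale[OF vsB])
  also have "\<dots> = sw sB (D 1) (\<lambda>x y. sw sB (D 1) (\<lambda>u v. sB (eps (k*v)) (\<pi> x * \<pi> (S (u * y) * h))))"
    by (rule sym, rule wcomult1[OF vsB, where F="\<lambda>p q r. sB (eps (k*r)) (\<pi> p * \<pi> (S q * h))"]) (intro li)
  also have "\<dots> = sw sB (D 1) (\<lambda>x y. \<pi> x * \<pi> (S (w * y) * h))"
  proof -
    have "sw sB (D 1) (\<lambda>u v. sB (eps (k*v)) (\<pi> x * \<pi> (S (u * y) * h))) = \<pi> x * \<pi> (S (w * y) * h)" for x y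
    proof -
      have L: "lin sH sB (\<lambda>m. \<pi> x * \<pi> (S (m * y) * h))" by (intro li)
      show ?thesis using pull[OF L, of "D 1" "\<lambda>u v. eps (k*v)" "\<lambda>u v. u"] by (simp add: w eps_s_def)
    qed
    then show ?thesis by simp
  qed
  also have "\<dots> = sw sB (D 1) (\<lambda>x y. \<pi> x * \<pi> (S y * (S w * h)))"
    by (simp add: S_mult mult.assoc)
  also have "\<dots> = sw sB (D 1) (\<lambda>x y. \<pi> x * \<pi> (S y) * \<pi> (S w * h))"
    by (rule PR4[symmetric])
  also have "\<dots> = sw sB (D 1) (\<lambda>x y. \<pi> x * \<pi> (S y)) * \<pi> (S w * h)"
    by (simp add: sw_mult_right[OF kaB])
  also have "\<dots> = \<pi> (S w * h)" using CP1[of 1 1] by (simp add: act1 phi1)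
  finally show ?thesis .
qed

lemma uniq_ident:
  assumes f: "bilin sA sH (*) f"
  shows "sw (*) (smult D act (pstens D act a 1) (pstens D act 1 h)) f = sw (*) (pstens D act a h) f"
proof -
  have r2: "sw (*) (D 1) (\<lambda>x1 y1. sw (*) (D y1) (\<lambda>u v. f (a * act x1 1 * act u (act x2 1)) (v*y2))) =
     sw (*) (D 1) (\<lambda>x y. sw (*) (D 1) (\<lambda>u v. f (a * act x 1 * act (y*(u*x2)) 1) (v*y2)))" for x2 y2
  proof -
    have "sw (*) (D 1) (\<lambda>x1 y1. sw (*) (D y1) (\<lambda>u v. f (a * act x1 1 * act u (act x2 1)) (v*y2))) =
       sw (*) (D 1) (\<lambda>x y. sw (*) (D x) (\<lambda>p q. f (a * act p 1 * act q (act x2 1)) (y*y2)))"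
      by (rule sym, rule coassoc[OF vs_field, where F="\<lambda>p q r. f (a * act p 1 * act q (act x2 1)) (r*y2)"])
        (intro li lin_compD1[OF f] lin_compD2[OF f])
    also have "\<dots> = sw (*) (D 1) (\<lambda>x y. f (a * act x (act x2 1)) (y*y2))"
    proof -
      have "sw (*) (D x) (\<lambda>p q. f (a * act p 1 * act q (act x2 1)) (y*y2)) = f (a * act x (act x2 1)) (y*y2)" for x y
      proof -
        have L: "lin sA (*) (\<lambda>m. f (a * m) (y*y2))" by (intro li lin_compD1[OF f])
        show ?thesis using act_mult[of x 1 "act x2 1"] sw_linear_map[OF L, of "D x" "\<lambda>p q. act p 1 * act q (act x2 1)"]
          by (simp add: mult.assoc)
      qed
      then show ?thesis by simp
    qed
    also have "\<dots> = sw (*) (D 1) (\<lambda>x y. sw (*) (D x) (\<lambda>p q. f (a * act p 1 * act (q*x2) 1) (y*y2)))"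
    proof -
      have "f (a * act x (act x2 1)) (y*y2) = sw (*) (D x) (\<lambda>p q. f (a * act p 1 * act (q*x2) 1) (y*y2))" for x y
      proof -
        have L: "lin sA (*) (\<lambda>m. f (a * m) (y*y2))" by (intro li lin_compD1[OF f])
        show ?thesis using act_comp[of x x2 1] sw_linear_map[OF L, of "D x" "\<lambda>p q. act p 1 * act (q*x2) 1"]
          by (simp add: mult.assoc)
      qed
      then show ?thesis by simp
    qed
    also have "\<dots> = sw (*) (D 1) (\<lambda>x y. sw (*) (D 1) (\<lambda>u v. f (a * act x 1 * act (y*u*x2) 1) (v*y2)))"
      by (rule sym, rule wcomult2[OF vs_field, where F="\<lambda>p q r. f (a * act p 1 * act (q*x2) 1) (r*y2)"])
        (intro li lin_compD1[OF f] lin_compD2[OF f])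
    finally show ?thesis by (simp add: mult.assoc)
  qed
  have r4: "sw (*) (D h) (\<lambda>x2 y2. sw (*) (D 1) (\<lambda>u v. f (a * act x 1 * act (y*(u*x2)) 1) (v*y2))) =
      sw (*) (D h) (\<lambda>m n. f (a * act x 1 * act (y*m) 1) n)" for x y
  proof -
    have "sw (*) (D h) (\<lambda>x2 y2. sw (*) (D 1) (\<lambda>u v. f (a * act x 1 * act (y*(u*x2)) 1) (v*y2))) =
       sw (*) (D 1) (\<lambda>u v. sw (*) (D h) (\<lambda>x2 y2. f (a * act x 1 * act (y*(u*x2)) 1) (v*y2)))"
      by (rule sw_swap[OF vs_field])
    also have "\<dots> = sw (*) (D (1 * h)) (\<lambda>m n. f (a * act x 1 * act (y*m) 1) n)"
      by (rule sym, rule dmult[OF vs_field, where F="\<lambda>m n. f (a * act x 1 * act (y*m) 1) n"])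
        (intro li lin_compD1[OF f] lin_compD2[OF f] bilinD2[OF f])
    finally show ?thesis by simp
  qed
  have r5: "sw (*) (D 1) (\<lambda>x y. f (a * act x 1 * act (y*m) 1) n) = f (a * act m 1) n" for m n
  proof -
    have L: "lin sA (*) (\<lambda>q. f (a * q) n)" by (intro li lin_compD1[OF f])
    show ?thesis using act_comp[of 1 m 1] sw_linear_map[OF L, of "D 1" "\<lambda>x y. act x 1 * act (y*m) 1"]
      by (simp add: mult.assoc act1)
  qed
  have "sw (*) (smult D act (pstens D act a 1) (pstens D act 1 h)) f =
     sw (*) (D 1) (\<lambda>x1 y1. sw (*) (D h) (\<lambda>x2 y2. sw (*) (D y1) (\<lambda>u v. f (a * act x1 1 * act u (act x2 1)) (v*y2))))"
    by (simp add: sw_smult[OF vs_field] psw[OF vs_field])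
  also have "\<dots> = sw (*) (D h) (\<lambda>x2 y2. sw (*) (D 1) (\<lambda>x1 y1. sw (*) (D y1) (\<lambda>u v. f (a * act x1 1 * act u (act x2 1)) (v*y2))))"
    by (rule sw_swap[OF vs_field])
  also have "\<dots> = sw (*) (D h) (\<lambda>x2 y2. sw (*) (D 1) (\<lambda>x y. sw (*) (D 1) (\<lambda>u v. f (a * act x 1 * act (y*(u*x2)) 1) (v*y2))))"
    by (simp only: r2)
  also have "\<dots> = sw (*) (D 1) (\<lambda>x y. sw (*) (D h) (\<lambda>x2 y2. sw (*) (D 1) (\<lambda>u v. f (a * act x 1 * act (y*(u*x2)) 1) (v*y2))))"
    by (rule sw_swap[OF vs_field])
  also have "\<dots> = sw (*) (D 1) (\<lambda>x y. sw (*) (D h) (\<lambda>m n. f (a * act x 1 * act (y*m) 1) n))"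
    by (simp only: r4)
  also have "\<dots> = sw (*) (D h) (\<lambda>m n. sw (*) (D 1) (\<lambda>x y. f (a * act x 1 * act (y*m) 1) n))"
    by (rule sw_swap[OF vs_field])
  also have "\<dots> = sw (*) (D h) (\<lambda>m n. f (a * act m 1) n)"
    by (simp only: r5)
  also have "\<dots> = sw (*) (pstens D act a h) f" by (simp add: psw[OF vs_field])
  finally show ?thesis .
qed


definition "Phi X = sw sB X (\<lambda>a h. \<phi> a * \<pi> h)"

lemma P_mult: "Phi (smult D act X Y) = Phi X * Phi Y"
proof -
  have "Phi (smult D act X Y) = sw sB X (\<lambda>a h. sw sB Y (\<lambda>b g. \<phi> a * \<pi> h * \<phi> b * \<pi> g))"
    unfolding Phi_def by (simp add: sw_smult[OF vsB] M_ident)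
  also have "\<dots> = sw sB X (\<lambda>a h. \<phi> a * \<pi> h * sw sB Y (\<lambda>b g. \<phi> b * \<pi> g))"
    by (simp only: sw_mult_left[OF kaB] mult.assoc)
  also have "\<dots> = Phi X * Phi Y"
    unfolding Phi_def by (rule sw_mult_right[OF kaB, symmetric])
  finally show ?thesis .
qed

lemma P_add: "Phi (X + Y) = Phi X + Phi Y" unfolding Phi_def by (rule sw_add_T[OF vsB])
lemma P_scale: "Phi (sscale c X) = sB c (Phi X)" unfolding Phi_def by (rule sw_sscale[OF vsB])
lemma P_pst: "Phi (pstens D act a h) = \<phi> a * \<pi> h"
  unfolding Phi_def using M_ident[of h a 1 1] by (simp add: psw[OF vsB] phi1 pi1)

lemma P_eq:
  assumes "smash_eq sH D eps S sA act X Y"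
  shows "Phi X = Phi Y"
  unfolding Phi_def
proof (rule sep[OF vsB])
  fix l :: "'b \<Rightarrow> 'k" assume l: "lin sB (*) l"
  have b: "bilin sA sH (*) (\<lambda>a h. l (\<phi> a * \<pi> h))" by (intro li lin_compL[OF l])
  have bal: "\<forall>a z h. z \<in> Ht D eps sH \<longrightarrow>
      l (\<phi> (ract D eps sH S act a z) * \<pi> h) = l (\<phi> a * \<pi> (z * h))"
  proof (intro allI impI)
    fix a z h assume z: "z \<in> Ht D eps sH"
    have zi: "z \<in> S ` Hs D eps sH" by (rule surj_SR[OF z])
    define w where "w = SR_inv D eps sH S z"
    have wHs: "w \<in> Hs D eps sH" unfolding w_def SR_inv_def by (rule inv_into_into[OF zi])
    have Sw: "S w = z" unfolding w_def SR_inv_def by (rule f_inv_into_f[OF zi])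
    have "\<phi> (ract D eps sH S act a z) * \<pi> h = \<phi> a * (\<phi> (act w 1) * \<pi> h)"
      unfolding ract_def w_def by (simp add: phim mult.assoc)
    also have "\<dots> = \<phi> a * \<pi> (z * h)" by (simp add: W3[OF wHs] Sw)
    finally show "l (\<phi> (ract D eps sH S act a z) * \<pi> h) = l (\<phi> a * \<pi> (z * h))" by simp
  qed
  have "sw (*) X (\<lambda>a h. l (\<phi> a * \<pi> h)) = sw (*) Y (\<lambda>a h. l (\<phi> a * \<pi> h))"
    using assms b bal unfolding smash_eq_def by blast
  then show "l (sw sB X (\<lambda>a h. \<phi> a * \<pi> h)) = l (sw sB Y (\<lambda>a h. \<phi> a * \<pi> h))"
    by (simp add: sw_linear_map[OF l])
qed

lemma Phi_hom: "psmash_hom sH D eps S sA act sB Phi"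
  unfolding psmash_hom_def Let_def
  using P_eq P_add P_scale P_mult P_pst[of 1 1] by (simp add: phi1 pi1)

lemma uniq:
  assumes hom: "psmash_hom sH D eps S sA act sB Psi"
    and g1: "\<forall>h. Psi (pstens D act 1 h) = \<pi> h"
    and g2: "\<forall>a. Psi (pstens D act a 1) = \<phi> a"
    and X: "X \<in> psmash sH D eps S sA act"
  shows "Psi X = Phi X"
proof -
  let ?P = "psmash sH D eps S sA act"
  have H1: "\<forall>X\<in>?P. \<forall>Y\<in>?P. smash_eq sH D eps S sA act X Y \<longrightarrow> Psi X = Psi Y"
    using hom unfolding psmash_hom_def Let_def by blast
  have H2: "\<forall>X\<in>?P. \<forall>Y\<in>?P. Psi (X + Y) = Psi X + Psi Y"
    using hom unfolding psmash_hom_def Let_def by blast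
  have H3: "\<forall>c. \<forall>X\<in>?P. Psi (sscale c X) = sB c (Psi X)"
    using hom unfolding psmash_hom_def Let_def by blast
  have H4: "\<forall>X\<in>?P. \<forall>Y\<in>?P. Psi (smult D act X Y) = Psi X * Psi Y"
    using hom unfolding psmash_hom_def Let_def by blast
  show ?thesis
  using X
  proof (induction X rule: psmash.induct)
    case (gen a h)
    have m: "smult D act (pstens D act a 1) (pstens D act 1 h) \<in> ?P"
      by (intro psmash.mult psmash.gen)
    have e: "smash_eq sH D eps S sA act (smult D act (pstens D act a 1) (pstens D act 1 h)) (pstens D act a h)"
      unfolding smash_eq_def using uniq_ident by blast
    have "Psi (pstens D act a h) = Psi (smult D act (pstens D act a 1) (pstens D act 1 h))"
      using H1 m psmash.gen e by (metis (no_types, lifting))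
    also have "\<dots> = Psi (pstens D act a 1) * Psi (pstens D act 1 h)"
      using H4 psmash.gen by blast
    also have "\<dots> = \<phi> a * \<pi> h" using g1 g2 by simp
    finally show ?case by (simp add: P_pst)
  next
    case (add X Y)
    then show ?case using H2 P_add by simp
  next
    case (scale X c)
    then show ?case using H3 P_scale by simp
  next
    case (mult X Y)
    then show ?case using H4 P_mult by simp
  next
    case (eq X Y)
    have Y: "Y \<in> ?P" by (rule psmash.eq[OF eq(1,2)])
    have "Psi Y = Psi X" using H1 eq(1,2) Y by blast
    also have "\<dots> = Phi X" by (rule eq.IH)
    also have "\<dots> = Phi Y" using P_eq[OF eq(2)] by simp
    finally show ?case .
  qed
qed

lemma main: "\<exists>\<Phi>. (psmash_hom sH D eps S sA act sB \<Phi> \<and>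
              (\<forall>h. \<Phi> (pstens D act 1 h) = \<pi> h) \<and>
              (\<forall>a. \<Phi> (pstens D act a 1) = \<phi> a)) \<and>
            (\<forall>\<Psi>. psmash_hom sH D eps S sA act sB \<Psi> \<and>
                  (\<forall>h. \<Psi> (pstens D act 1 h) = \<pi> h) \<and>
                  (\<forall>a. \<Psi> (pstens D act a 1) = \<phi> a) \<longrightarrow>
                  (\<forall>X\<in>psmash sH D eps S sA act. \<Psi> X = \<Phi> X))"
proof (rule exI[of _ Phi], intro conjI allI impI ballI)
  show "psmash_hom sH D eps S sA act sB Phi" by (rule Phi_hom)
  show "Phi (pstens D act 1 h) = \<pi> h" for h by (simp add: P_pst phi1)
  show "Phi (pstens D act a 1) = \<phi> a" for a by (simp add: P_pst pi1)
  fix Psi X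
  assume "psmash_hom sH D eps S sA act sB Psi \<and> (\<forall>h. Psi (pstens D act 1 h) = \<pi> h) \<and>
       (\<forall>a. Psi (pstens D act a 1) = \<phi> a)" and "X \<in> psmash sH D eps S sA act"
  then show "Psi X = Phi X" using uniq by blast
qed

end

theorem theorem3p14:
  fixes sH :: "'k::field \<Rightarrow> 'h::{ring,monoid_mult} \<Rightarrow> 'h"
    and D :: "'h \<Rightarrow> ('h \<times> 'h \<Rightarrow>\<^sub>0 'k)"
    and eps :: "'h \<Rightarrow> 'k"
    and S :: "'h \<Rightarrow> 'h"
    and sA :: "'k \<Rightarrow> 'a::{ring,monoid_mult} \<Rightarrow> 'a"
    and act :: "'h \<Rightarrow> 'a \<Rightarrow> 'a"
    and sB :: "'k \<Rightarrow> 'b::{ring,monoid_mult} \<Rightarrow> 'b"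
    and \<pi> :: "'h \<Rightarrow> 'b"
    and \<phi> :: "'a \<Rightarrow> 'b"
  assumes "weak_hopf sH D eps S"
    and "symmetric_partial_module_algebra sH D sA act"
    and "k_algebra sB"
    and "partial_rep sH D S sB \<pi>"
    and "alg_hom sA sB \<phi>"
    and "covariant_pair sH D S sA act sB \<phi> \<pi>"
  shows "\<exists>\<Phi>. (psmash_hom sH D eps S sA act sB \<Phi> \<and>
              (\<forall>h. \<Phi> (pstens D act 1 h) = \<pi> h) \<and>
              (\<forall>a. \<Phi> (pstens D act a 1) = \<phi> a)) \<and>
            (\<forall>\<Psi>. psmash_hom sH D eps S sA act sB \<Psi> \<and>
                  (\<forall>h. \<Psi> (pstens D act 1 h) = \<pi> h) \<and>
                  (\<forall>a. \<Psi> (pstens D act a 1) = \<phi> a) \<longrightarrow>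
                  (\<forall>X\<in>psmash sH D eps S sA act. \<Psi> X = \<Phi> X))"
proof -
  interpret setting sH D eps S sA act sB \<pi> \<phi>
    by (intro setting.intro wha.intro setting_axioms.intro assms)
  show ?thesis by (rule main)
qed

end
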